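(* Let $\mathbb{F}$ be a field of characteristic zero, $P_n=\mathbb{F}[x_1,\dots,x_n]$ and $I_n=\big(x_1^2,\dots,x_n^2,(x_1+\cdots+x_n)^2\big)$. For each integer $k\ge 2$ with $2k-2\le n$, let $D_k$ be the set of square-free monomials of degree $k$ in the variables $x_1,\dots,x_{2k-2}$ that are not divisible by any square-free monomial of degree $k'$ in the variables $x_1,\dots,x_{2k'-2}$ for any $2\le k'<k$. Then a minimal set of generators of the initial ideal $\mathrm{in}(I_n)$ with respect to the reverse lexicographic order is $\{x_1^2,\dots,x_n^2\}\cup\bigcup_{2k-2\le n}D_k$.
   Context: The reverse lexicographic order is taken with $x_1>x_2>\cdots>x_n$. For example $D_2=\{x_1x_2\}$, $D_3=\{x_1x_3x_4,x_2x_3x_4\}$. *)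

theory Defs
  imports Main "HOL-Library.Poly_Mapping"
begin

text \<open>Multivariate polynomials: monomials are exponent vectors nat =>0 nat
  (variable x_i has index i), polynomials are finitely supported maps from monomials to
  coefficients.\<close>

type_synonym monom = "nat \<Rightarrow>\<^sub>0 nat"
type_synonym 'a mpoly = "monom \<Rightarrow>\<^sub>0 'a"

definition tdeg :: "monom \<Rightarrow> nat" where
  "tdeg m = (\<Sum>i\<in>Poly_Mapping.keys m. Poly_Mapping.lookup m i)"

text \<open>Graded reverse lexicographic order with x_1 > x_2 > ... :
  m < m' iff deg m < deg m', or equal degree and at the largest index where they differ
  m has the larger exponent.\<close>
definition drl_less :: "monom \<Rightarrow> monom \<Rightarrow> bool" where
  "drl_less m m' \<longleftrightarrow> tdeg m < tdeg m' \<or>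
     (tdeg m = tdeg m' \<and> m \<noteq> m' \<and>
        (let i = Max {j. Poly_Mapping.lookup m j \<noteq> Poly_Mapping.lookup m' j} in Poly_Mapping.lookup m i > Poly_Mapping.lookup m' i))"

definition lead_monom :: "'a::zero mpoly \<Rightarrow> monom" where
  "lead_monom p = (THE m. m \<in> Poly_Mapping.keys p \<and> (\<forall>m'\<in>Poly_Mapping.keys p. m' \<noteq> m \<longrightarrow> drl_less m' m))"

definition mon :: "monom \<Rightarrow> 'a::{zero,one} mpoly" where
  "mon m = Poly_Mapping.single m 1"

definition var :: "nat \<Rightarrow> 'a::{zero,one} mpoly" where
  "var i = mon (Poly_Mapping.single i 1)"

definition Pring :: "nat \<Rightarrow> 'a::zero mpoly set" where
  "Pring n = {p. \<forall>m\<in>Poly_Mapping.keys p. Poly_Mapping.keys m \<subseteq> {1..n}}"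

definition gen_ideal :: "nat \<Rightarrow> 'a::comm_ring_1 mpoly set \<Rightarrow> 'a mpoly set" where
  "gen_ideal n G = {\<Sum>g\<in>F. q g * g | F q. finite F \<and> F \<subseteq> G \<and> (\<forall>g\<in>F. q g \<in> Pring n)}"

definition In_ideal :: "nat \<Rightarrow> 'a::comm_ring_1 mpoly set" where
  "In_ideal n = gen_ideal n ((\<lambda>i. var i ^ 2) ` {1..n} \<union> {(\<Sum>i=1..n. var i) ^ 2})"

definition initial_ideal :: "nat \<Rightarrow> 'a::comm_ring_1 mpoly set \<Rightarrow> 'a mpoly set" where
  "initial_ideal n I = gen_ideal n {mon (lead_monom f) | f. f \<in> I \<and> f \<noteq> 0}"

definition mdvd :: "monom \<Rightarrow> monom \<Rightarrow> bool" where
  "mdvd m m' \<longleftrightarrow> (\<forall>i. Poly_Mapping.lookup m i \<le> Poly_Mapping.lookup m' i)"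

definition sqfree_monoms :: "nat \<Rightarrow> nat \<Rightarrow> monom set" where
  "sqfree_monoms k r = {m. Poly_Mapping.keys m \<subseteq> {1..r} \<and> (\<forall>i. Poly_Mapping.lookup m i \<le> 1) \<and> tdeg m = k}"

definition D :: "nat \<Rightarrow> monom set" where
  "D k = {m \<in> sqfree_monoms k (2*k-2).
            \<not> (\<exists>k'. 2 \<le> k' \<and> k' < k \<and> (\<exists>m'\<in>sqfree_monoms k' (2*k'-2). mdvd m' m))}"

definition minimal_generators :: "nat \<Rightarrow> 'a::comm_ring_1 mpoly set \<Rightarrow> 'a mpoly set \<Rightarrow> bool" where
  "minimal_generators n G J \<longleftrightarrow> gen_ideal n G = J \<and> (\<forall>g\<in>G. gen_ideal n (G - {g}) \<noteq> J)"

end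

theory Submission
  imports Defs
begin

definition Lop :: "(nat set \<Rightarrow> 'a::field_char_0) \<Rightarrow> nat set \<Rightarrow> 'a" where
  "Lop f S = (\<Sum>i\<in>S. f (S - {i}))"

lemma Lop_apply: "S = S \<Longrightarrow> Lop f S = (\<Sum>i\<in>S. f (S - {i}))"
  by (simp add: Lop_def)

lemma Lpow_Suc: "(Lop ^^ Suc t) f S = Lop ((Lop ^^ t) f) S"
  by simp

lemma Lpow_Suc': "(Lop ^^ Suc t) f = (Lop ^^ t) (Lop f)"
  by (simp add: funpow_Suc_right del: funpow.simps)

lemma Lop_lin: "Lop (\<lambda>S. a * f S + b * g S) = (\<lambda>S. a * Lop f S + b * Lop g S)"
  by (rule ext) (simp add: Lop_def sum.distrib sum_distrib_left)

lemma Lpow_lin: "(Lop ^^ t) (\<lambda>S. a * f S + b * g S) = (\<lambda>S. a * (Lop ^^ t) f S + b * (Lop ^^ t) g S)"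
  by (induction t) (simp_all add: Lop_lin)

lemma Lpow_zero: "(Lop ^^ t) (\<lambda>S. 0) = (\<lambda>S. 0)"
  by (induction t) (simp_all add: Lop_def)

lemma Lpow_loc:
  "finite S \<Longrightarrow> (\<And>T. T \<subseteq> S \<Longrightarrow> card T + s = card S \<Longrightarrow> f T = g T) \<Longrightarrow> (Lop ^^ s) f S = (Lop ^^ s) g S"
proof (induction s arbitrary: S)
  case 0 then show ?case by simp
next
  case (Suc s)
  have "(Lop ^^ s) f (S - {i}) = (Lop ^^ s) g (S - {i})" if "i \<in> S" for i
  proof (rule Suc.IH)
    show "finite (S - {i})" using Suc.prems by simp
    fix T assume "T \<subseteq> S - {i}" "card T + s = card (S - {i})"
    moreover have "card S > 0" using Suc.prems that card_gt_0_iff by blast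
    ultimately show "f T = g T" using Suc.prems that
      by (intro Suc.prems(2)) (auto simp: card_Diff_singleton)
  qed
  then show ?case unfolding Lpow_Suc by (simp add: Lop_apply cong: sum.cong)
qed

lemma Lpow_small: "finite S \<Longrightarrow> card S < s \<Longrightarrow> (Lop ^^ s) f S = 0"
proof -
  assume "finite S" "card S < s"
  then have "(Lop ^^ s) f S = (Lop ^^ s) (\<lambda>S. 0) S"
    by (intro Lpow_loc) auto
  then show ?thesis by (simp add: Lpow_zero)
qed

lemma Lpow_split:
  "finite S \<Longrightarrow> m \<notin> S \<Longrightarrow>
    (Lop ^^ t) f (insert m S) = (Lop ^^ t) (\<lambda>T. f (insert m T)) S + of_nat t * (Lop ^^ (t - 1)) f S"
proof (induction t arbitrary: S)
  case 0 then show ?case by simp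
next
  case (Suc t)
  have "(Lop ^^ Suc t) f (insert m S) = (\<Sum>i\<in>insert m S. (Lop ^^ t) f (insert m S - {i}))"
    unfolding Lpow_Suc by (simp add: Lop_apply)
  also have "\<dots> = (Lop ^^ t) f S + (\<Sum>i\<in>S. (Lop ^^ t) f (insert m (S - {i})))"
    using Suc.prems by (simp add: insert_Diff_if) (intro sum.cong; auto)
  also have "(\<Sum>i\<in>S. (Lop ^^ t) f (insert m (S - {i}))) =
     (\<Sum>i\<in>S. (Lop ^^ t) (\<lambda>T. f (insert m T)) (S - {i}) + of_nat t * (Lop ^^ (t - 1)) f (S - {i}))"
    using Suc.prems by (intro sum.cong refl Suc.IH) auto
  also have "\<dots> = (Lop ^^ Suc t) (\<lambda>T. f (insert m T)) S + of_nat t * Lop ((Lop ^^ (t - 1)) f) S"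
    unfolding Lpow_Suc by (simp add: Lop_apply sum.distrib sum_distrib_left)
  also have "(Lop ^^ t) f S + ((Lop ^^ Suc t) (\<lambda>T. f (insert m T)) S + of_nat t * Lop ((Lop ^^ (t - 1)) f) S)
      = (Lop ^^ Suc t) (\<lambda>T. f (insert m T)) S + of_nat (Suc t) * (Lop ^^ (Suc t - 1)) f S"
  proof (cases t)
    case 0 then show ?thesis by simp
  next
    case (Suc t')
    then have "Lop ((Lop ^^ (t - 1)) f) S = (Lop ^^ t) f S" by simp
    then show ?thesis by (simp add: algebra_simps)
  qed
  finally show ?case .
qed

lemma subset_Suc_cases:
  assumes "S \<subseteq> {1..Suc m}"
  shows "(S \<subseteq> {1..m} \<and> Suc m \<notin> S) \<or> (Suc m \<in> S \<and> S - {Suc m} \<subseteq> {1..m})"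
  using assms by (auto simp: subset_iff le_Suc_eq)

lemma Lpow_inj:
  "2*j + t \<le> m \<Longrightarrow> (\<forall>S\<subseteq>{1..m}. card S = j + t \<longrightarrow> (Lop ^^ t) f S = 0) \<Longrightarrow>
    S \<subseteq> {1..m} \<Longrightarrow> card S = j \<Longrightarrow> f S = (0::'a::field_char_0)"
proof (induction m arbitrary: j t f S)
  case 0
  then have "S = {}" "j = 0" "t = 0" by auto
  then show ?case using 0 by auto
next
  case (Suc m)
  note H = Suc.prems(2)
  show ?case
  proof (cases "t = 0")
    case True then show ?thesis using Suc.prems by simp
  next
    case False
    define f1 where "f1 = (\<lambda>T. f (insert (Suc m) T))"
    have H0: "(Lop ^^ t) f S = 0" if "S \<subseteq> {1..m}" "card S = j + t" for S
      using H that by (meson atLeastAtMost_iff le_Suc_eq subset_iff)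
    have H1: "(Lop ^^ t) f1 S + of_nat t * (Lop ^^ (t - 1)) f S = 0"
      if S: "S \<subseteq> {1..m}" "card S + 1 = j + t" for S
    proof -
      have fin: "finite S" using S finite_subset by blast
      have nin: "Suc m \<notin> S" using S by auto
      have "(Lop ^^ t) f (insert (Suc m) S) = 0"
        using S fin nin by (intro H[rule_format]) auto
      then show ?thesis using Lpow_split[OF fin nin, of t f] f1_def by simp
    qed
    have Z: "(\<forall>S\<subseteq>{1..m}. card S = j \<longrightarrow> f S = 0) \<and> (\<forall>S\<subseteq>{1..m}. card S + 1 = j \<longrightarrow> f1 S = 0)"
    proof (cases "2*j + t \<le> m")
      case True
      have Z0: "\<forall>S\<subseteq>{1..m}. card S = j \<longrightarrow> f S = 0"
        using Suc.IH[OF True] H0 by blast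
      have L1: "(Lop ^^ (t - 1)) f S = 0" if S: "S \<subseteq> {1..m}" "card S + 1 = j + t" for S
      proof -
        have fin: "finite S" using S finite_subset by blast
        have "(Lop ^^ (t - 1)) f S = (Lop ^^ (t - 1)) (\<lambda>S. 0) S"
        proof (rule Lpow_loc[OF fin])
          fix T assume "T \<subseteq> S" "card T + (t - 1) = card S"
          then show "f T = 0" using Z0 S False by auto
        qed
        then show ?thesis by (simp add: Lpow_zero)
      qed
      have Z1: "\<forall>S\<subseteq>{1..m}. card S + 1 = j \<longrightarrow> f1 S = 0"
      proof (cases j)
        case 0 then show ?thesis by simp
      next
        case (Suc j')
        have "\<forall>S\<subseteq>{1..m}. card S = j' + t \<longrightarrow> (Lop ^^ t) f1 S = 0"
          using H1 L1 Suc by fastforce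
        moreover have "2 * j' + t \<le> m" using True Suc by simp
        ultimately show ?thesis using Suc.IH[of j' t f1] Suc by auto
      qed
      show ?thesis using Z0 Z1 by blast
    next
      case False
      then have eq: "2*j + t = Suc m" using Suc.prems(1) by simp
      define g where "g = (\<lambda>S. of_nat t * f S + 1 * Lop f1 S)"
      have tt: "Suc (t - 1) = t" using \<open>t \<noteq> 0\<close> by simp
      have "(Lop ^^ (t - 1)) g S = 0" if "S \<subseteq> {1..m}" "card S = j + (t - 1)" for S
      proof -
        have "(Lop ^^ (t - 1)) g S = of_nat t * (Lop ^^ (t - 1)) f S + 1 * (Lop ^^ (t - 1)) (Lop f1) S"
          unfolding g_def Lpow_lin by simp
        also have "(Lop ^^ (t - 1)) (Lop f1) = (Lop ^^ t) f1"
          using Lpow_Suc'[of "t - 1" f1] tt by simp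
        finally show ?thesis using H1[of S] that \<open>t \<noteq> 0\<close> by (simp add: algebra_simps)
      qed
      moreover have "2*j + (t - 1) \<le> m" using eq \<open>t \<noteq> 0\<close> by linarith
      ultimately have Zg: "\<forall>S\<subseteq>{1..m}. card S = j \<longrightarrow> g S = 0"
        using Suc.IH[of j "t - 1" g] by blast
      show ?thesis
      proof (cases j)
        case 0
        have "g {} = of_nat t * f {}" by (simp add: g_def Lop_apply)
        then have "f {} = 0" using Zg 0 \<open>t \<noteq> 0\<close> by auto
        moreover have "S = {}" if "S \<subseteq> {1..m}" "card S = 0" for S :: "nat set"
          using that by (meson card_0_eq finite_atLeastAtMost finite_subset)
        ultimately show ?thesis using 0 by auto
      next
        case (Suc j')
        have "(Lop ^^ (t + 1)) f1 S = 0" if S: "S \<subseteq> {1..m}" "card S = j' + (t + 1)" for S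
        proof -
          have fin: "finite S" using S finite_subset by blast
          have "(Lop ^^ (t + 1)) f1 S = (Lop ^^ t) (Lop f1) S"
            using Lpow_Suc'[of t f1] by simp
          also have "\<dots> = (Lop ^^ t) (\<lambda>T. (- of_nat t) * f T + 0 * f T) S"
          proof (rule Lpow_loc[OF fin])
            fix T assume T: "T \<subseteq> S" "card T + t = card S"
            then have "g T = 0" using Zg S Suc by auto
            then show "Lop f1 T = (- of_nat t) * f T + 0 * f T" unfolding g_def by (simp add: algebra_simps eq_neg_iff_add_eq_0)
          qed
          also have "\<dots> = 0" unfolding Lpow_lin using H0[of S] S Suc by simp
          finally show ?thesis .
        qed
        then have Z1: "\<forall>S\<subseteq>{1..m}. card S = j' \<longrightarrow> f1 S = 0"
          using Suc.IH[of j' "t + 1" f1] eq Suc by auto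
        have Z0: "f S = 0" if S: "S \<subseteq> {1..m}" "card S = j" for S
        proof -
          have fin: "finite S" using S finite_subset by blast
          have "Lop f1 S = 0" unfolding Lop_apply[OF refl]
          proof (intro sum.neutral ballI)
            fix x assume "x \<in> S"
            then show "f1 (S - {x}) = 0" using Z1 S Suc fin
              by (metis Diff_subset card_Diff_singleton diff_Suc_1 subset_trans)
          qed
          then show ?thesis using Zg S \<open>t \<noteq> 0\<close> by (auto simp: g_def)
        qed
        show ?thesis using Z0 Z1 Suc by auto
      qed
    qed
    show ?thesis
      using subset_Suc_cases[OF Suc.prems(3)]
    proof
      assume "S \<subseteq> {1..m} \<and> Suc m \<notin> S" then show ?thesis using Z Suc.prems by auto
    next
      assume A: "Suc m \<in> S \<and> S - {Suc m} \<subseteq> {1..m}"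
      then have "S = insert (Suc m) (S - {Suc m})" by auto
      then have "f S = f1 (S - {Suc m})" by (simp add: f1_def)
      moreover have "card (S - {Suc m}) + 1 = j" using A Suc.prems(3,4)
        by (metis Suc_eq_plus1 card_Suc_Diff1 finite_atLeastAtMost finite_subset)
      ultimately show ?thesis using Z A by auto
    qed
  qed
qed

lemma card_le_m: "S \<subseteq> {1..m} \<Longrightarrow> card S \<le> (m::nat)"
  using card_mono[of "{1..m}" S] by simp

lemma Lpow_surj:
  "m \<le> 2*j + t \<Longrightarrow> \<exists>f. \<forall>S\<subseteq>{1..m}. card S = j + t \<longrightarrow> (Lop ^^ t) f S = (y S::'a::field_char_0)"
proof (induction m arbitrary: j t y)
  case 0
  show ?case
  proof (intro exI allI impI)
    fix S :: "nat set" assume "S \<subseteq> {1..0}" "card S = j + t"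
    then have "t = 0" by simp
    then show "(Lop ^^ t) y S = y S" by simp
  qed
next
  case (Suc m)
  show ?case
  proof (cases "t = 0")
    case True then show ?thesis by (intro exI[of _ y]) simp
  next
    case False
    have main: "\<exists>F0 F1. (\<forall>S\<subseteq>{1..m}. card S = j + t \<longrightarrow> (Lop ^^ t) F0 S = y S) \<and>
       (\<forall>S\<subseteq>{1..m}. card S + 1 = j + t \<longrightarrow>
          (Lop ^^ t) F1 S + of_nat t * (Lop ^^ (t - 1)) F0 S = y (insert (Suc m) S))"
    proof (cases "Suc m < 2*j + t")
      case True
      obtain F0 where F0: "\<forall>S\<subseteq>{1..m}. card S = j + t \<longrightarrow> (Lop ^^ t) F0 S = y S"
        using Suc.IH[of j t y] True by (meson Suc_leD less_or_eq_imp_le)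
      show ?thesis
      proof (cases j)
        case 0
        have "\<forall>S\<subseteq>{1..m}. card S + 1 = j + t \<longrightarrow> False"
        proof (intro allI impI)
          fix S assume "S \<subseteq> {1..m}" "card S + 1 = j + t"
          then show False using card_le_m[of S m] True 0 by linarith
        qed
        then show ?thesis using F0 by blast
      next
        case (Suc j')
        obtain F1 where F1: "\<forall>S\<subseteq>{1..m}. card S = j' + t \<longrightarrow>
           (Lop ^^ t) F1 S = y (insert (Suc m) S) - of_nat t * (Lop ^^ (t - 1)) F0 S"
        proof -
          have "m \<le> 2 * j' + t" using True Suc by linarith
          then show ?thesis using that Suc.IH[of j' t "\<lambda>S. y (insert (Suc m) S) - of_nat t * (Lop ^^ (t - 1)) F0 S"]
            by blast
        qed
        have "(\<forall>S\<subseteq>{1..m}. card S + 1 = j + t \<longrightarrow>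
          (Lop ^^ t) F1 S + of_nat t * (Lop ^^ (t - 1)) F0 S = y (insert (Suc m) S))"
        proof (intro allI impI)
          fix S assume "S \<subseteq> {1..m}" "card S + 1 = j + t"
          moreover have "card S = j' + t" using calculation Suc by linarith
          ultimately show "(Lop ^^ t) F1 S + of_nat t * (Lop ^^ (t - 1)) F0 S = y (insert (Suc m) S)"
            using F1 by simp
        qed
        then show ?thesis using F0 by blast
      qed
    next
      case False
      then have eq: "2*j + t = Suc m" using Suc.prems by simp
      have tt: "Suc (t - 1) = t" using \<open>t \<noteq> 0\<close> by simp
      obtain w where w: "\<forall>S\<subseteq>{1..m}. card S = j + (t - 1) \<longrightarrow> (Lop ^^ (t - 1)) w S = y (insert (Suc m) S)"
      proof -
        have "m \<le> 2 * j + (t - 1)" using eq \<open>t \<noteq> 0\<close> by linarith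
        then show ?thesis using that Suc.IH[of j "t - 1" "\<lambda>S. y (insert (Suc m) S)"] by blast
      qed
      obtain h1 where h1: "j \<ge> 1 \<longrightarrow> (\<forall>S\<subseteq>{1..m}. card S = (j - 1) + (t + 1) \<longrightarrow>
          (Lop ^^ (t + 1)) h1 S = (Lop ^^ t) w S - of_nat t * y S)"
      proof (cases j)
        case 0 then show ?thesis using that by auto
      next
        case (Suc j')
        have "m \<le> 2 * j' + (t + 1)" using eq Suc by linarith
        then obtain h where "\<forall>S\<subseteq>{1..m}. card S = j' + (t + 1) \<longrightarrow>
          (Lop ^^ (t + 1)) h S = (Lop ^^ t) w S - of_nat t * y S"
          using Suc.IH[of j' "t + 1" "\<lambda>S. (Lop ^^ t) w S - of_nat t * y S"] by blast
        then show ?thesis using that[of h] Suc by simp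
      qed
      define c where "c = 1 / (of_nat t :: 'a)"
      have ct: "of_nat t * c = 1" using \<open>t \<noteq> 0\<close> by (simp add: c_def)
      define F0 where "F0 = (\<lambda>S. c * w S + (- c) * Lop h1 S)"
      have R0: "(Lop ^^ t) F0 S = y S" if S: "S \<subseteq> {1..m}" "card S = j + t" for S
      proof -
        have j1: "j \<ge> 1" using S card_le_m[OF S(1)] eq by linarith
        have "(Lop ^^ t) F0 S = c * (Lop ^^ t) w S + (- c) * (Lop ^^ t) (Lop h1) S"
          unfolding F0_def Lpow_lin by simp
        also have "(Lop ^^ t) (Lop h1) = (Lop ^^ (t + 1)) h1" using Lpow_Suc'[of t h1] by simp
        also have "(Lop ^^ (t + 1)) h1 S = (Lop ^^ t) w S - of_nat t * y S"
          using h1 j1 S by simp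
        finally show ?thesis using ct by (simp add: algebra_simps)
      qed
      have R1: "(Lop ^^ t) h1 S + of_nat t * (Lop ^^ (t - 1)) F0 S = y (insert (Suc m) S)"
        if S: "S \<subseteq> {1..m}" "card S + 1 = j + t" for S
      proof -
        have "(Lop ^^ (t - 1)) F0 S = c * (Lop ^^ (t - 1)) w S + (- c) * (Lop ^^ (t - 1)) (Lop h1) S"
          unfolding F0_def Lpow_lin by simp
        also have "(Lop ^^ (t - 1)) (Lop h1) = (Lop ^^ t) h1" using Lpow_Suc'[of "t - 1" h1] tt by simp
        finally have "(Lop ^^ (t - 1)) F0 S = c * (Lop ^^ (t - 1)) w S - c * (Lop ^^ t) h1 S"
          by simp
        then have "of_nat t * (Lop ^^ (t - 1)) F0 S = of_nat t * (c * (Lop ^^ (t - 1)) w S - c * (Lop ^^ t) h1 S)"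
          by (rule arg_cong)
        also have "\<dots> = (of_nat t * c) * (Lop ^^ (t - 1)) w S - (of_nat t * c) * (Lop ^^ t) h1 S"
          by (simp only: right_diff_distrib mult.assoc)
        finally have "of_nat t * (Lop ^^ (t - 1)) F0 S = (of_nat t * c) * (Lop ^^ (t - 1)) w S - (of_nat t * c) * (Lop ^^ t) h1 S" .
        then have "of_nat t * (Lop ^^ (t - 1)) F0 S = (Lop ^^ (t - 1)) w S - (Lop ^^ t) h1 S"
          using ct by simp
        moreover have "(Lop ^^ (t - 1)) w S = y (insert (Suc m) S)"
        proof -
          have "card S = j + (t - 1)" using S(2) \<open>t \<noteq> 0\<close> by linarith
          then show ?thesis using w S(1) by blast
        qed
        ultimately show ?thesis by simp
      qed
      show ?thesis using R0 R1 by blast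
    qed
    then obtain F0 F1 where F0: "\<forall>S\<subseteq>{1..m}. card S = j + t \<longrightarrow> (Lop ^^ t) F0 S = y S"
      and F1: "\<forall>S\<subseteq>{1..m}. card S + 1 = j + t \<longrightarrow>
          (Lop ^^ t) F1 S + of_nat t * (Lop ^^ (t - 1)) F0 S = y (insert (Suc m) S)" by blast
    define f where "f = (\<lambda>S. if Suc m \<in> S then F1 (S - {Suc m}) else F0 S)"
    show ?thesis
    proof (intro exI[of _ f] allI impI)
      fix S assume S: "S \<subseteq> {1..Suc m}" "card S = j + t"
      have fin: "finite S" using S finite_subset by blast
      show "(Lop ^^ t) f S = y S"
        using subset_Suc_cases[OF S(1)]
      proof
        assume A: "S \<subseteq> {1..m} \<and> Suc m \<notin> S"
        have "(Lop ^^ t) f S = (Lop ^^ t) F0 S"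
          by (rule Lpow_loc[OF fin]) (use A in \<open>auto simp: f_def\<close>)
        then show ?thesis using F0 A S by auto
      next
        assume A: "Suc m \<in> S \<and> S - {Suc m} \<subseteq> {1..m}"
        define S' where "S' = S - {Suc m}"
        have SS: "S = insert (Suc m) S'" using A by (auto simp: S'_def)
        have fin': "finite S'" using fin by (simp add: S'_def)
        have nin: "Suc m \<notin> S'" by (simp add: S'_def)
        have c: "card S' + 1 = j + t" using S(2) SS fin' nin by simp
        have "(Lop ^^ t) f S = (Lop ^^ t) (\<lambda>T. f (insert (Suc m) T)) S' + of_nat t * (Lop ^^ (t - 1)) f S'"
          unfolding SS by (rule Lpow_split[OF fin' nin])
        also have "(Lop ^^ t) (\<lambda>T. f (insert (Suc m) T)) S' = (Lop ^^ t) F1 S'"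
        proof (rule Lpow_loc[OF fin'])
          fix T assume "T \<subseteq> S'"
          then have "Suc m \<notin> T" using nin by auto
          then show "f (insert (Suc m) T) = F1 T" by (simp add: f_def)
        qed
        also have "(Lop ^^ (t - 1)) f S' = (Lop ^^ (t - 1)) F0 S'"
        proof (rule Lpow_loc[OF fin'])
          fix T assume "T \<subseteq> S'"
          then have "Suc m \<notin> T" using nin by auto
          then show "f T = F0 T" by (simp add: f_def)
        qed
        finally show ?thesis using F1 A c SS unfolding S'_def by simp
      qed
    qed
  qed
qed

definition set_less :: "nat set \<Rightarrow> nat set \<Rightarrow> bool" where
  "set_less T S \<longleftrightarrow> (\<exists>i\<in>T - S. \<forall>j>i. (j \<in> T \<longleftrightarrow> j \<in> S))"

lemma Lpow_nonstd:
  "S \<subseteq> {1..m} \<Longrightarrow> (Lop ^^ 2) \<phi> S \<noteq> (0::'a::field_char_0) \<Longrightarrow>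
   (\<forall>T\<subseteq>{1..m}. card T = card S \<longrightarrow> T \<noteq> S \<longrightarrow> (Lop ^^ 2) \<phi> T \<noteq> 0 \<longrightarrow> set_less T S) \<Longrightarrow>
   \<exists>k\<ge>2. k \<le> card (S \<inter> {1..2*k-2})"
proof (induction m arbitrary: S \<phi>)
  case 0
  then have "S = {}" by auto
  then have "(Lop ^^ 2) \<phi> S = 0" by (intro Lpow_small) auto
  then show ?case using 0 by simp
next
  case (Suc m)
  have finS: "finite S" using Suc.prems(1) finite_subset by blast
  show ?case
  proof (cases "\<exists>T\<subseteq>{1..m}. card T = card S \<and> (Lop ^^ 2) \<phi> T \<noteq> 0")
    case True
    then obtain T where T: "T \<subseteq> {1..m}" "card T = card S" "(Lop ^^ 2) \<phi> T \<noteq> 0" by blast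
    have "Suc m \<notin> S"
    proof
      assume "Suc m \<in> S"
      moreover have "Suc m \<notin> T" using T by auto
      ultimately have "T \<noteq> S" by auto
      moreover have "T \<subseteq> {1..Suc m}" using T by auto
      ultimately have "set_less T S" using Suc.prems(3) T by blast
      then obtain i where i: "i \<in> T - S" "\<forall>j>i. (j \<in> T \<longleftrightarrow> j \<in> S)" unfolding set_less_def by blast
      have "i < Suc m" using i T by auto
      then show False using i(2) \<open>Suc m \<in> S\<close> \<open>Suc m \<notin> T\<close> by blast
    qed
    then have S1: "S \<subseteq> {1..m}" using Suc.prems(1) subset_Suc_cases by blast
    show ?thesis
    proof (rule Suc.IH[OF S1 Suc.prems(2)], intro allI impI)
      fix T assume "T \<subseteq> {1..m}" "card T = card S" "T \<noteq> S" "(Lop ^^ 2) \<phi> T \<noteq> 0"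
      moreover have "T \<subseteq> {1..Suc m}" using calculation by auto
      ultimately show "set_less T S" using Suc.prems(3) by blast
    qed
  next
    case False
    have "Suc m \<in> S"
    proof (rule ccontr)
      assume "Suc m \<notin> S"
      then have "S \<subseteq> {1..m}" using Suc.prems(1) subset_Suc_cases by blast
      then show False using False Suc.prems(2) by blast
    qed
    have d2: "card S \<ge> 2"
      using Lpow_small[OF finS, of 2 \<phi>] Suc.prems(2) by force
    show ?thesis
    proof (cases "Suc m \<le> 2 * card S - 2")
      case True
      then have "S \<inter> {1..2 * card S - 2} = S" using Suc.prems(1) by auto
      then show ?thesis using d2 by (intro exI[of _ "card S"]) simp
    next
      case le: False
      define d where "d = card S"
      have inj: "\<phi> T = 0" if "T \<subseteq> {1..m}" "card T = d - 2" for T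
      proof (rule Lpow_inj[of "d - 2" 2 m \<phi>])
        show "2 * (d - 2) + 2 \<le> m" using le d2 d_def by linarith
        show "\<forall>S\<subseteq>{1..m}. card S = d - 2 + 2 \<longrightarrow> (Lop ^^ 2) \<phi> S = 0"
        proof (intro allI impI)
          fix U assume "U \<subseteq> {1..m}" "card U = d - 2 + 2"
          then show "(Lop ^^ 2) \<phi> U = 0" using False d2 d_def by simp
        qed
      qed (use that in auto)
      define S' where "S' = S - {Suc m}"
      define \<phi>1 where "\<phi>1 = (\<lambda>T. \<phi> (insert (Suc m) T))"
      have S'sub: "S' \<subseteq> {1..m}" using Suc.prems(1) \<open>Suc m \<in> S\<close> subset_Suc_cases S'_def by blast
      have SS: "S = insert (Suc m) S'" using \<open>Suc m \<in> S\<close> S'_def by auto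
      have nS': "Suc m \<notin> S'" by (simp add: S'_def)
      have cS': "card S' + 1 = d" using \<open>Suc m \<in> S\<close> finS d_def S'_def
        by (simp add: card_Diff_singleton) (metis One_nat_def Suc_pred card_gt_0_iff empty_iff)
      have red: "(Lop ^^ 2) \<phi> (insert (Suc m) T) = (Lop ^^ 2) \<phi>1 T"
        if T: "T \<subseteq> {1..m}" "card T + 1 = d" for T
      proof -
        have finT: "finite T" using T finite_subset by blast
        have nin: "Suc m \<notin> T" using T by auto
        have "(Lop ^^ (2 - 1)) \<phi> T = (Lop ^^ (2 - 1)) (\<lambda>S. 0) T"
        proof (rule Lpow_loc[OF finT])
          fix U assume "U \<subseteq> T" "card U + (2 - 1) = card T"
          then show "\<phi> U = 0" using inj[of U] T d2 by auto
        qed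
        then have "(Lop ^^ (2 - 1)) \<phi> T = 0" by (simp add: Lop_apply)
        then show ?thesis using Lpow_split[OF finT nin, of 2 \<phi>] \<phi>1_def by simp
      qed
      have "\<exists>k\<ge>2. k \<le> card (S' \<inter> {1..2*k-2})"
      proof (rule Suc.IH[OF S'sub])
        show "(Lop ^^ 2) \<phi>1 S' \<noteq> 0" using red[OF S'sub cS'] SS Suc.prems(2) by simp
        show "\<forall>T\<subseteq>{1..m}. card T = card S' \<longrightarrow> T \<noteq> S' \<longrightarrow> (Lop ^^ 2) \<phi>1 T \<noteq> 0 \<longrightarrow> set_less T S'"
        proof (intro allI impI)
          fix T assume T: "T \<subseteq> {1..m}" "card T = card S'" "T \<noteq> S'" "(Lop ^^ 2) \<phi>1 T \<noteq> 0"
          have finT: "finite T" using T finite_subset by blast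
          have nin: "Suc m \<notin> T" using T by auto
          have "insert (Suc m) T \<subseteq> {1..Suc m}" using T by auto
          moreover have "card (insert (Suc m) T) = card S" using finT nin T cS' d_def by simp
          moreover have "insert (Suc m) T \<noteq> S" using SS T(3) nin nS' by (metis Diff_insert_absorb)
          moreover have "(Lop ^^ 2) \<phi> (insert (Suc m) T) \<noteq> 0" using red[of T] T cS' by simp
          ultimately have "set_less (insert (Suc m) T) S" using Suc.prems(3) by blast
          then obtain i where i: "i \<in> insert (Suc m) T - S" "\<forall>j>i. (j \<in> insert (Suc m) T \<longleftrightarrow> j \<in> S)"
            unfolding set_less_def by blast
          have "i \<in> T - S'" using i(1) SS by auto
          moreover have "\<forall>j>i. (j \<in> T \<longleftrightarrow> j \<in> S')"
            using i(2) nin SS nS' by auto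
          ultimately show "set_less T S'" unfolding set_less_def by blast
        qed
      qed
      then obtain k where k: "k \<ge> 2" "k \<le> card (S' \<inter> {1..2*k-2})" by blast
      have "card (S' \<inter> {1..2*k-2}) \<le> card (S \<inter> {1..2*k-2})"
        using finS SS by (intro card_mono) auto
      then show ?thesis using k by (intro exI[of _ k]) auto
    qed
  qed
qed


section \<open>The order\<close>

definition drl' :: "monom \<Rightarrow> monom \<Rightarrow> bool" where
  "drl' a b \<longleftrightarrow> tdeg a < tdeg b \<or> (tdeg a = tdeg b \<and>
     (\<exists>i. Poly_Mapping.lookup a i > Poly_Mapping.lookup b i \<and>
         (\<forall>k>i. Poly_Mapping.lookup a k = Poly_Mapping.lookup b k)))"

lemma finite_diffset: "finite {j. Poly_Mapping.lookup a j \<noteq> Poly_Mapping.lookup (b::monom) j}"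
proof (rule finite_subset[of _ "Poly_Mapping.keys a \<union> Poly_Mapping.keys b"])
  show "{j. Poly_Mapping.lookup a j \<noteq> Poly_Mapping.lookup b j} \<subseteq> Poly_Mapping.keys a \<union> Poly_Mapping.keys b"
    by (auto simp: in_keys_iff)
qed simp

lemma drl_less_iff: "drl_less a b \<longleftrightarrow> drl' a b"
proof
  assume A: "drl_less a b"
  show "drl' a b"
  proof (cases "tdeg a < tdeg b")
    case True then show ?thesis by (simp add: drl'_def)
  next
    case False
    define D where "D = {j. Poly_Mapping.lookup a j \<noteq> Poly_Mapping.lookup b j}"
    have ne: "a \<noteq> b" and eq: "tdeg a = tdeg b" and gt: "Poly_Mapping.lookup a (Max D) > Poly_Mapping.lookup b (Max D)"
      using A False unfolding drl_less_def D_def Let_def by auto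
    have fin: "finite D" unfolding D_def by (rule finite_diffset)
    have "D \<noteq> {}"
    proof
      assume "D = {}"
      then have "\<And>j. Poly_Mapping.lookup a j = Poly_Mapping.lookup b j" unfolding D_def by auto
      then show False using ne poly_mapping_eqI by metis
    qed
    have "\<forall>k>Max D. Poly_Mapping.lookup a k = Poly_Mapping.lookup b k"
      using Max_ge[OF fin] unfolding D_def by (metis (mono_tags) leD mem_Collect_eq)
    then show ?thesis using eq gt unfolding drl'_def by blast
  qed
next
  assume A: "drl' a b"
  show "drl_less a b"
  proof (cases "tdeg a < tdeg b")
    case True then show ?thesis by (simp add: drl_less_def)
  next
    case False
    then obtain i where eq: "tdeg a = tdeg b" and i: "Poly_Mapping.lookup a i > Poly_Mapping.lookup b i"
      "\<forall>k>i. Poly_Mapping.lookup a k = Poly_Mapping.lookup b k"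
      using A unfolding drl'_def by blast
    define D where "D = {j. Poly_Mapping.lookup a j \<noteq> Poly_Mapping.lookup b j}"
    have fin: "finite D" unfolding D_def by (rule finite_diffset)
    have "Max D = i"
      by (rule Max_eqI[OF fin]) (use i in \<open>auto simp: D_def intro: leI\<close>)
    moreover have "a \<noteq> b" using i by auto
    ultimately show ?thesis using eq i unfolding drl_less_def D_def Let_def by auto
  qed
qed

lemma drl_asym: "drl_less a b \<Longrightarrow> \<not> drl_less b a"
proof
  assume ab: "drl_less a b" and ba: "drl_less b a"
  have e: "tdeg a = tdeg b" using ab ba unfolding drl_less_iff drl'_def by auto
  obtain i where i: "Poly_Mapping.lookup a i > Poly_Mapping.lookup b i"
      "\<forall>k>i. Poly_Mapping.lookup a k = Poly_Mapping.lookup b k"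
      using ab e unfolding drl_less_iff drl'_def by auto
  obtain j where j: "Poly_Mapping.lookup b j > Poly_Mapping.lookup a j"
      "\<forall>k>j. Poly_Mapping.lookup b k = Poly_Mapping.lookup a k"
      using ba e unfolding drl_less_iff drl'_def by auto
  show False
  proof (cases i j rule: linorder_cases)
    case less then show ?thesis using i j by force
  next
    case equal then show ?thesis using i j by force
  next
    case greater then show ?thesis using i j by force
  qed
qed

lemma drl_trans: "drl_less a b \<Longrightarrow> drl_less b c \<Longrightarrow> drl_less a c"
proof -
  assume ab: "drl_less a b" and bc: "drl_less b c"
  have tab: "tdeg a \<le> tdeg b" and tbc: "tdeg b \<le> tdeg c"
    using ab bc unfolding drl_less_iff drl'_def by auto
  show ?thesis
  proof (cases "tdeg a < tdeg c")
    case True then show ?thesis by (simp add: drl_less_iff drl'_def)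
  next
    case False
    then have e1: "tdeg a = tdeg b" and e2: "tdeg b = tdeg c" using tab tbc by auto
    obtain i where i: "Poly_Mapping.lookup a i > Poly_Mapping.lookup b i"
      "\<forall>k>i. Poly_Mapping.lookup a k = Poly_Mapping.lookup b k"
      using ab e1 unfolding drl_less_iff drl'_def by auto
    obtain j where j: "Poly_Mapping.lookup b j > Poly_Mapping.lookup c j"
      "\<forall>k>j. Poly_Mapping.lookup b k = Poly_Mapping.lookup c k"
      using bc e2 unfolding drl_less_iff drl'_def by auto
    have "\<exists>p. Poly_Mapping.lookup a p > Poly_Mapping.lookup c p \<and> (\<forall>k>p. Poly_Mapping.lookup a k = Poly_Mapping.lookup c k)"
    proof (cases i j rule: linorder_cases)
      case less
      then show ?thesis using i j by (intro exI[of _ j]) auto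
    next
      case equal
      then show ?thesis using i j by (intro exI[of _ j]) auto
    next
      case greater
      then show ?thesis using i j by (intro exI[of _ i]) auto
    qed
    then show ?thesis using e1 e2 by (simp add: drl_less_iff drl'_def)
  qed
qed

lemma drl_total: "a \<noteq> b \<Longrightarrow> drl_less a b \<or> drl_less b a"
proof -
  assume ne: "a \<noteq> b"
  show ?thesis
  proof (cases "tdeg a = tdeg b")
    case False then show ?thesis by (auto simp: drl_less_def)
  next
    case True
    define D where "D = {j. Poly_Mapping.lookup a j \<noteq> Poly_Mapping.lookup b j}"
    have fin: "finite D" unfolding D_def by (rule finite_diffset)
    have "D \<noteq> {}"
    proof
      assume "D = {}"
      then have "\<And>j. Poly_Mapping.lookup a j = Poly_Mapping.lookup b j" unfolding D_def by auto
      then show False using ne poly_mapping_eqI by metis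
    qed
    then have "Max D \<in> D" using fin by simp
    then have "Poly_Mapping.lookup a (Max D) > Poly_Mapping.lookup b (Max D) \<or>
               Poly_Mapping.lookup b (Max D) > Poly_Mapping.lookup a (Max D)" by (auto simp: D_def)
    moreover have "\<forall>k>Max D. Poly_Mapping.lookup a k = Poly_Mapping.lookup b k"
      using Max_ge[OF fin] unfolding D_def by (metis (mono_tags) leD mem_Collect_eq)
    ultimately show ?thesis using True unfolding drl_less_iff drl'_def by metis
  qed
qed

lemma exists_max:
  "finite K \<Longrightarrow> K \<noteq> {} \<Longrightarrow> \<exists>m\<in>K. \<forall>m'\<in>K. m' \<noteq> m \<longrightarrow> drl_less m' m"
proof (induction K rule: finite_ne_induct)
  case (singleton x) then show ?case by simp
next
  case (insert x K)
  then obtain m where m: "m \<in> K" "\<forall>m'\<in>K. m' \<noteq> m \<longrightarrow> drl_less m' m" by blast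
  show ?case
  proof (cases "drl_less m x")
    case True
    have "\<forall>m'\<in>insert x K. m' \<noteq> x \<longrightarrow> drl_less m' x"
    proof (intro ballI impI)
      fix m' assume "m' \<in> insert x K" "m' \<noteq> x"
      then have "m' \<in> K" by simp
      show "drl_less m' x"
      proof (cases "m' = m")
        case True then show ?thesis using \<open>drl_less m x\<close> by simp
      next
        case False then show ?thesis using m \<open>m' \<in> K\<close> True drl_trans by blast
      qed
    qed
    then show ?thesis by blast
  next
    case False
    then have "x \<noteq> m \<longrightarrow> drl_less x m" using drl_total by blast
    then show ?thesis using m by (intro bexI[of _ m]) auto
  qed
qed

lemma lead_monom_eqI:
  assumes "m \<in> Poly_Mapping.keys p" "\<forall>m'\<in>Poly_Mapping.keys p. m' \<noteq> m \<longrightarrow> drl_less m' m"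
  shows "lead_monom p = m"
  unfolding lead_monom_def
proof (rule the_equality)
  show "m \<in> Poly_Mapping.keys p \<and> (\<forall>m'\<in>Poly_Mapping.keys p. m' \<noteq> m \<longrightarrow> drl_less m' m)" using assms by blast
next
  fix m' assume "m' \<in> Poly_Mapping.keys p \<and> (\<forall>m''\<in>Poly_Mapping.keys p. m'' \<noteq> m' \<longrightarrow> drl_less m'' m')"
  then have H: "m' \<in> Poly_Mapping.keys p" "\<forall>m''\<in>Poly_Mapping.keys p. m'' \<noteq> m' \<longrightarrow> drl_less m'' m'" by blast+
  show "m' = m"
  proof (rule ccontr)
    assume ne: "m' \<noteq> m"
    then have "drl_less m' m" using assms H(1) by blast
    moreover have "drl_less m m'" by (rule H(2)[rule_format, OF assms(1)]) (use ne in auto)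
    ultimately show False using drl_asym by blast
  qed
qed

lemma lead_monom_prop:
  assumes "p \<noteq> 0"
  shows "lead_monom p \<in> Poly_Mapping.keys p \<and> (\<forall>m'\<in>Poly_Mapping.keys p. m' \<noteq> lead_monom p \<longrightarrow> drl_less m' (lead_monom p))"
proof -
  have "Poly_Mapping.keys p \<noteq> {}" using assms by simp
  then obtain m where "m \<in> Poly_Mapping.keys p" "\<forall>m'\<in>Poly_Mapping.keys p. m' \<noteq> m \<longrightarrow> drl_less m' m"
    using exists_max[of "Poly_Mapping.keys p"] by auto
  moreover then have "lead_monom p = m" by (rule lead_monom_eqI)
  ultimately show ?thesis by simp
qed

definition chi :: "nat set \<Rightarrow> monom" where
  "chi T = (\<Sum>i\<in>T. Poly_Mapping.single i 1)"

lemma lookup_chi: "finite T \<Longrightarrow> Poly_Mapping.lookup (chi T) i = (if i \<in> T then 1 else 0)"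
  by (simp add: chi_def lookup_sum lookup_single when_def)

lemma keys_chi: "finite T \<Longrightarrow> Poly_Mapping.keys (chi T) = T"
  by (auto simp: in_keys_iff lookup_chi split: if_splits)

lemma chi_insert: "finite T \<Longrightarrow> i \<notin> T \<Longrightarrow> chi (insert i T) = Poly_Mapping.single i 1 + chi T"
  by (simp add: chi_def)

lemma tdeg_sum: "finite K \<Longrightarrow> Poly_Mapping.keys m \<subseteq> K \<Longrightarrow> tdeg m = (\<Sum>i\<in>K. Poly_Mapping.lookup m i)"
  unfolding tdeg_def by (rule sum.mono_neutral_left) (auto simp: in_keys_iff)

lemma tdeg_chi: "finite T \<Longrightarrow> tdeg (chi T) = card T"
  by (simp add: tdeg_def keys_chi lookup_chi)

definition sqf :: "monom \<Rightarrow> bool" where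
  "sqf m \<longleftrightarrow> (\<forall>i. Poly_Mapping.lookup m i \<le> 1)"

lemma sqf_chi: "finite T \<Longrightarrow> sqf (chi T)"
  by (simp add: sqf_def lookup_chi)

lemma sqf_eq_chi: "sqf m \<Longrightarrow> m = chi (Poly_Mapping.keys m)"
proof (rule poly_mapping_eqI)
  fix i assume "sqf m"
  then have "Poly_Mapping.lookup m i \<le> 1" by (simp add: sqf_def)
  then show "Poly_Mapping.lookup m i = Poly_Mapping.lookup (chi (Poly_Mapping.keys m)) i"
    by (auto simp: lookup_chi in_keys_iff)
qed

lemma not_sqf_add: "\<not> sqf b \<Longrightarrow> \<not> sqf (a + b)"
  unfolding sqf_def lookup_add by (meson le_add2 order_trans)

section \<open>Square-free part\<close>

definition sf :: "'a::comm_ring_1 mpoly \<Rightarrow> 'a mpoly" where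
  "sf p = Abs_poly_mapping (\<lambda>m. if sqf m then Poly_Mapping.lookup p m else 0)"

lemma lookup_sf: "Poly_Mapping.lookup (sf p) m = (if sqf m then Poly_Mapping.lookup p m else 0)"
proof -
  have "finite {m. (if sqf m then Poly_Mapping.lookup p m else 0) \<noteq> 0}"
    by (rule finite_subset[of _ "Poly_Mapping.keys p"]) (auto simp: in_keys_iff)
  then show ?thesis unfolding sf_def by simp
qed

lemma sf_add: "sf (p + q) = sf p + sf q"
  by (rule poly_mapping_eqI) (simp add: lookup_sf lookup_add)

lemma sf_diff: "sf (p - q) = sf p - sf q"
  by (rule poly_mapping_eqI) (simp add: lookup_sf lookup_minus)

lemma sf_sum: "sf (\<Sum>x\<in>A. f x) = (\<Sum>x\<in>A. sf (f x))"
  by (rule poly_mapping_eqI) (simp add: lookup_sf lookup_sum)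

lemma sf_single: "sf (Poly_Mapping.single m c) = (if sqf m then Poly_Mapping.single m c else 0)"
  by (rule poly_mapping_eqI) (simp add: lookup_sf lookup_single when_def)

lemma sf_zero_if: "(\<forall>m\<in>Poly_Mapping.keys p. \<not> sqf m) \<Longrightarrow> sf p = 0"
  by (rule poly_mapping_eqI) (auto simp: lookup_sf in_keys_iff)

lemma keys_sf: "Poly_Mapping.keys (sf p) \<subseteq> Poly_Mapping.keys p"
  by (auto simp: in_keys_iff lookup_sf split: if_splits)

lemma sf_mult_zero: "(\<forall>m\<in>Poly_Mapping.keys b. \<not> sqf m) \<Longrightarrow> sf (a * b) = 0"
proof (rule sf_zero_if, intro ballI)
  fix k assume H: "\<forall>m\<in>Poly_Mapping.keys b. \<not> sqf m" and k: "k \<in> Poly_Mapping.keys (a * b)"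
  then obtain x y where "k = x + y" "y \<in> Poly_Mapping.keys b" using keys_mult by blast
  then show "\<not> sqf k" using H not_sqf_add by blast
qed

lemma sf_mult: "sf (a * b) = sf (a * sf b)"
proof -
  have "a * b = a * sf b + a * (b - sf b)" by (simp add: algebra_simps)
  moreover have "sf (a * (b - sf b)) = 0"
  proof (rule sf_mult_zero, intro ballI)
    fix m assume "m \<in> Poly_Mapping.keys (b - sf b)"
    then show "\<not> sqf m" by (auto simp: in_keys_iff lookup_minus lookup_sf)
  qed
  ultimately show ?thesis by (simp add: sf_add)
qed

section \<open>Embedding of set functions\<close>

definition E :: "nat \<Rightarrow> (nat set \<Rightarrow> 'a::comm_ring_1) \<Rightarrow> 'a mpoly" where
  "E n \<phi> = (\<Sum>T\<in>Pow {1..n}. Poly_Mapping.single (chi T) (\<phi> T))"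

lemma chi_eq_iff: "T \<subseteq> {1..n} \<Longrightarrow> (chi T = m) \<longleftrightarrow> (sqf m \<and> Poly_Mapping.keys m = T)"
proof -
  assume T: "T \<subseteq> {1..n}"
  then have fin: "finite T" using finite_subset by blast
  show ?thesis
  proof
    assume "chi T = m" then show "sqf m \<and> Poly_Mapping.keys m = T"
      using fin sqf_chi keys_chi by blast
  next
    assume "sqf m \<and> Poly_Mapping.keys m = T" then show "chi T = m"
      using sqf_eq_chi by metis
  qed
qed

lemma lookup_E: "Poly_Mapping.lookup (E n \<phi>) m =
    (if sqf m \<and> Poly_Mapping.keys m \<subseteq> {1..n} then \<phi> (Poly_Mapping.keys m) else 0)"
proof -
  have "Poly_Mapping.lookup (E n \<phi>) m = (\<Sum>T\<in>Pow {1..n}. if chi T = m then \<phi> T else 0)"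
    by (simp add: E_def lookup_sum lookup_single when_def)
  also have "\<dots> = (\<Sum>T\<in>Pow {1..n}. if T = Poly_Mapping.keys m \<and> sqf m then \<phi> T else 0)"
    by (rule sum.cong) (use chi_eq_iff in auto)
  also have "\<dots> = (if sqf m \<and> Poly_Mapping.keys m \<subseteq> {1..n} then \<phi> (Poly_Mapping.keys m) else 0)"
    by (cases "sqf m") (simp_all add: sum.delta')
  finally show ?thesis .
qed

lemma lookup_E_chi: "T \<subseteq> {1..n} \<Longrightarrow> Poly_Mapping.lookup (E n \<phi>) (chi T) = \<phi> T"
proof -
  assume T: "T \<subseteq> {1..n}"
  then have fin: "finite T" using finite_subset by blast
  then show ?thesis using T by (simp add: lookup_E sqf_chi keys_chi)
qed

lemma E_cong: "(\<And>S. S \<subseteq> {1..n} \<Longrightarrow> \<phi> S = \<psi> S) \<Longrightarrow> E n \<phi> = E n \<psi>"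
  by (rule poly_mapping_eqI) (simp add: lookup_E)

lemma E_zero: "E n (\<lambda>S. 0) = 0"
  by (rule poly_mapping_eqI) (simp add: lookup_E)

lemma E_sum: "(\<Sum>i\<in>I. E n (f i)) = E n (\<lambda>S. \<Sum>i\<in>I. f i S)"
proof (rule poly_mapping_eqI)
  fix k show "Poly_Mapping.lookup (\<Sum>i\<in>I. E n (f i)) k = Poly_Mapping.lookup (E n (\<lambda>S. \<Sum>i\<in>I. f i S)) k"
  proof (cases "sqf k \<and> Poly_Mapping.keys k \<subseteq> {1..n}")
    case True then show ?thesis by (simp add: lookup_E lookup_sum)
  next
    case False
    then have "Poly_Mapping.lookup (E n g) k = 0" for g :: "nat set \<Rightarrow> 'a" using False unfolding lookup_E by presburger
    then show ?thesis by (simp add: lookup_sum)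
  qed
qed

lemma sf_E: "sf (E n \<phi>) = E n \<phi>"
  by (rule poly_mapping_eqI) (simp add: lookup_E lookup_sf)

lemma E_Pring: "E n \<phi> \<in> Pring n"
  unfolding Pring_def
proof (intro CollectI ballI)
  fix m assume "m \<in> Poly_Mapping.keys (E n \<phi>)"
  then have "Poly_Mapping.lookup (E n \<phi>) m \<noteq> 0" by (simp add: in_keys_iff)
  then show "Poly_Mapping.keys m \<subseteq> {1..n}" by (simp add: lookup_E split: if_splits)
qed

lemma sf_Pring: "p \<in> Pring n \<Longrightarrow> sf p = E n (\<lambda>S. Poly_Mapping.lookup p (chi S))"
proof (rule poly_mapping_eqI)
  fix m assume p: "p \<in> Pring n"
  show "Poly_Mapping.lookup (sf p) m = Poly_Mapping.lookup (E n (\<lambda>S. Poly_Mapping.lookup p (chi S))) m"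
  proof (cases "sqf m")
    case True
    show ?thesis
    proof (cases "Poly_Mapping.keys m \<subseteq> {1..n}")
      case True
      then show ?thesis using \<open>sqf m\<close> sqf_eq_chi[of m] by (simp add: lookup_E lookup_sf)
    next
      case False
      then have "m \<notin> Poly_Mapping.keys p" using p unfolding Pring_def by blast
      then show ?thesis using False by (simp add: lookup_E lookup_sf in_keys_iff)
    qed
  next
    case False then show ?thesis by (simp add: lookup_E lookup_sf)
  qed
qed

section \<open>Multiplication by the linear form\<close>

definition lin :: "nat \<Rightarrow> 'a::comm_ring_1 mpoly" where
  "lin n = (\<Sum>i=1..n. var i)"

lemma var_mult_single: "var i * Poly_Mapping.single m (c::'a::comm_ring_1) = Poly_Mapping.single (Poly_Mapping.single i 1 + m) c"
  by (simp add: var_def mon_def mult_single)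

lemma single_chi_eq_iff:
  assumes T: "finite T" and m: "sqf m"
  shows "(Poly_Mapping.single i 1 + chi T = m) \<longleftrightarrow> (i \<in> Poly_Mapping.keys m \<and> T = Poly_Mapping.keys m - {i})"
proof
  assume A: "Poly_Mapping.single i 1 + chi T = m"
  have "Poly_Mapping.lookup m i \<le> 1" using m by (simp add: sqf_def)
  then have "i \<notin> T" using A T by (auto simp: lookup_add lookup_chi)
  then have "m = chi (insert i T)" using A T chi_insert by simp
  then have "Poly_Mapping.keys m = insert i T" using T by (simp add: keys_chi)
  then show "i \<in> Poly_Mapping.keys m \<and> T = Poly_Mapping.keys m - {i}" using \<open>i \<notin> T\<close> by auto
next
  assume A: "i \<in> Poly_Mapping.keys m \<and> T = Poly_Mapping.keys m - {i}"
  then have K: "Poly_Mapping.keys m = insert i T" by auto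
  have "i \<notin> T" using A by auto
  have "m = chi (Poly_Mapping.keys m)" using sqf_eq_chi[OF m] .
  also have "\<dots> = chi (insert i T)" using K by simp
  also have "\<dots> = Poly_Mapping.single i 1 + chi T" using \<open>i \<notin> T\<close> T by (simp add: chi_insert)
  finally show "Poly_Mapping.single i 1 + chi T = m" by simp
qed

lemma sf_var_E:
  assumes i: "i \<in> {1..n}"
  shows "sf (var i * E n \<phi>) = E n (\<lambda>S. if i \<in> S then \<phi> (S - {i}) else 0)"
proof (rule poly_mapping_eqI)
  fix m
  have eq: "var i * E n \<phi> = (\<Sum>T\<in>Pow {1..n}. Poly_Mapping.single (Poly_Mapping.single i 1 + chi T) (\<phi> T))"
    by (simp add: E_def sum_distrib_left var_mult_single)
  show "Poly_Mapping.lookup (sf (var i * E n \<phi>)) m = Poly_Mapping.lookup (E n (\<lambda>S. if i \<in> S then \<phi> (S - {i}) else 0)) m"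
  proof (cases "sqf m")
    case False then show ?thesis by (simp add: lookup_sf lookup_E)
  next
    case True
    have "Poly_Mapping.lookup (sf (var i * E n \<phi>)) m =
        (\<Sum>T\<in>Pow {1..n}. if Poly_Mapping.single i 1 + chi T = m then \<phi> T else 0)"
      using True by (simp add: eq lookup_sf lookup_sum lookup_single when_def)
    also have "\<dots> = (\<Sum>T\<in>Pow {1..n}. if T = Poly_Mapping.keys m - {i} then
                      (if i \<in> Poly_Mapping.keys m then \<phi> T else 0) else 0)"
    proof (rule sum.cong[OF refl])
      fix T assume "T \<in> Pow {1..n}"
      then have "finite T" using finite_subset by blast
      then show "(if Poly_Mapping.single i 1 + chi T = m then \<phi> T else 0) =
          (if T = Poly_Mapping.keys m - {i} then (if i \<in> Poly_Mapping.keys m then \<phi> T else 0) else 0)"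
        using single_chi_eq_iff[OF _ True, of T i] by auto
    qed
    also have "\<dots> = (if Poly_Mapping.keys m - {i} \<subseteq> {1..n} then
                      (if i \<in> Poly_Mapping.keys m then \<phi> (Poly_Mapping.keys m - {i}) else 0) else 0)"
      by (simp add: sum.delta')
    also have "\<dots> = Poly_Mapping.lookup (E n (\<lambda>S. if i \<in> S then \<phi> (S - {i}) else 0)) m"
      using True i by (auto simp: lookup_E)
    finally show ?thesis .
  qed
qed

lemma sf_lin_E: "sf (lin n * E n \<phi>) = E n (Lop \<phi>)"
proof -
  have "sf (lin n * E n \<phi>) = (\<Sum>i=1..n. sf (var i * E n \<phi>))"
    by (simp add: lin_def sum_distrib_right sf_sum)
  also have "\<dots> = (\<Sum>i=1..n. E n (\<lambda>S. if i \<in> S then \<phi> (S - {i}) else 0))"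
    by (rule sum.cong) (simp_all add: sf_var_E)
  also have "\<dots> = E n (\<lambda>S. \<Sum>i=1..n. if i \<in> S then \<phi> (S - {i}) else 0)"
    by (rule E_sum)
  also have "\<dots> = E n (Lop \<phi>)"
  proof (rule E_cong)
    fix S assume S: "S \<subseteq> {1..n}"
    have "(\<Sum>i=1..n. if i \<in> S then \<phi> (S - {i}) else 0) = (\<Sum>i\<in>{1..n} \<inter> S. \<phi> (S - {i}))"
      by (simp add: sum.inter_restrict)
    also have "{1..n} \<inter> S = S" using S by auto
    finally show "(\<Sum>i=1..n. if i \<in> S then \<phi> (S - {i}) else 0) = Lop \<phi> S"
      by (simp add: Lop_apply)
  qed
  finally show ?thesis .
qed

lemma sf_lin2: "h \<in> Pring n \<Longrightarrow> sf (lin n ^ 2 * h) = E n ((Lop ^^ 2) (\<lambda>S. Poly_Mapping.lookup h (chi S)))"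
proof -
  assume h: "h \<in> Pring n"
  have "sf (lin n ^ 2 * h) = sf (lin n * (lin n * h))" by (simp add: power2_eq_square algebra_simps)
  also have "\<dots> = sf (lin n * sf (lin n * h))" by (rule sf_mult)
  also have "sf (lin n * h) = sf (lin n * sf h)" by (rule sf_mult)
  also have "\<dots> = E n (Lop (\<lambda>S. Poly_Mapping.lookup h (chi S)))" using h by (simp add: sf_Pring sf_lin_E)
  also have "sf (lin n * E n (Lop (\<lambda>S. Poly_Mapping.lookup h (chi S)))) =
      E n (Lop (Lop (\<lambda>S. Poly_Mapping.lookup h (chi S))))" by (rule sf_lin_E)
  finally show ?thesis by (simp add: numeral_2_eq_2)
qed

lemma Pring_iff: "p \<in> Pring n \<longleftrightarrow> (\<forall>m\<in>Poly_Mapping.keys p. Poly_Mapping.keys m \<subseteq> {1..n})"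
  by (simp add: Pring_def)

lemma Pring_add: "p \<in> Pring n \<Longrightarrow> q \<in> Pring n \<Longrightarrow> p + q \<in> Pring n"
  unfolding Pring_iff
proof (intro ballI)
  fix k assume p: "\<forall>m\<in>Poly_Mapping.keys p. Poly_Mapping.keys m \<subseteq> {1..n}"
    and q: "\<forall>m\<in>Poly_Mapping.keys q. Poly_Mapping.keys m \<subseteq> {1..n}" and k: "k \<in> Poly_Mapping.keys (p + q)"
  then have "k \<in> Poly_Mapping.keys p \<union> Poly_Mapping.keys q" using keys_add[of p q] by blast
  then show "Poly_Mapping.keys k \<subseteq> {1..n}" using p q by (cases "k \<in> Poly_Mapping.keys p") simp_all
qed

lemma Pring_uminus: "p \<in> Pring n \<Longrightarrow> - (p::'a::comm_ring_1 mpoly) \<in> Pring n"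
  unfolding Pring_iff by (simp add: in_keys_iff)

lemma Pring_mult: "p \<in> Pring n \<Longrightarrow> q \<in> Pring n \<Longrightarrow> (p::'a::comm_ring_1 mpoly) * q \<in> Pring n"
  unfolding Pring_iff
proof (intro ballI)
  fix k assume p: "\<forall>m\<in>Poly_Mapping.keys p. Poly_Mapping.keys m \<subseteq> {1..n}"
    and q: "\<forall>m\<in>Poly_Mapping.keys q. Poly_Mapping.keys m \<subseteq> {1..n}" and k: "k \<in> Poly_Mapping.keys (p * q)"
  then obtain a b where "k = a + b" "a \<in> Poly_Mapping.keys p" "b \<in> Poly_Mapping.keys q" using keys_mult by blast
  moreover have "Poly_Mapping.keys (a + b) \<subseteq> Poly_Mapping.keys a \<union> Poly_Mapping.keys b" by (rule keys_add)
  ultimately show "Poly_Mapping.keys k \<subseteq> {1..n}" using p q by fastforce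
qed

lemma Pring_zero: "0 \<in> Pring n"
  by (simp add: Pring_iff)

lemma Pring_one: "(1::'a::comm_ring_1 mpoly) \<in> Pring n"
  by (simp add: Pring_iff)

lemma Pring_sum: "(\<And>x. x \<in> A \<Longrightarrow> f x \<in> Pring n) \<Longrightarrow> sum f A \<in> Pring n"
  by (induction A rule: infinite_finite_induct) (simp_all add: Pring_zero Pring_add)

lemma Pring_single: "Poly_Mapping.keys m \<subseteq> {1..n} \<Longrightarrow> Poly_Mapping.single m c \<in> Pring n"
  by (simp add: Pring_iff)

lemma Pring_var: "i \<in> {1..n} \<Longrightarrow> (var i :: 'a::comm_ring_1 mpoly) \<in> Pring n"
  unfolding var_def mon_def by (rule Pring_single) simp

lemma Pring_lin: "(lin n :: 'a::comm_ring_1 mpoly) \<in> Pring n"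
  unfolding lin_def by (rule Pring_sum) (simp add: Pring_var)

lemma Pring_pow2: "(p::'a::comm_ring_1 mpoly) \<in> Pring n \<Longrightarrow> p ^ 2 \<in> Pring n"
  by (simp add: power2_eq_square Pring_mult)

lemma gen_ideal_iff: "f \<in> gen_ideal n G \<longleftrightarrow>
    (\<exists>F q. f = (\<Sum>g\<in>F. q g * g) \<and> finite F \<and> F \<subseteq> G \<and> (\<forall>g\<in>F. q g \<in> Pring n))"
  unfolding gen_ideal_def by blast

lemma gen_ideal_gen: "g \<in> G \<Longrightarrow> g \<in> gen_ideal n G"
  unfolding gen_ideal_iff by (intro exI[of _ "{g}"] exI[of _ "\<lambda>_. 1"]) (simp add: Pring_one)

lemma gen_ideal_zero: "0 \<in> gen_ideal n G"
  unfolding gen_ideal_iff by (intro exI[of _ "{}"] exI[of _ "\<lambda>_. 1"]) simp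

lemma gen_ideal_add:
  assumes a: "a \<in> gen_ideal n G" and b: "b \<in> gen_ideal n G"
  shows "a + b \<in> gen_ideal n G"
proof -
  obtain F1 q1 where 1: "a = (\<Sum>g\<in>F1. q1 g * g)" "finite F1" "F1 \<subseteq> G" "\<forall>g\<in>F1. q1 g \<in> Pring n"
    using a unfolding gen_ideal_iff by blast
  obtain F2 q2 where 2: "b = (\<Sum>g\<in>F2. q2 g * g)" "finite F2" "F2 \<subseteq> G" "\<forall>g\<in>F2. q2 g \<in> Pring n"
    using b unfolding gen_ideal_iff by blast
  define q where "q = (\<lambda>g. (if g \<in> F1 then q1 g else 0) + (if g \<in> F2 then q2 g else 0))"
  have "(\<Sum>g\<in>F1 \<union> F2. q g * g) = (\<Sum>g\<in>F1 \<union> F2. (if g \<in> F1 then q1 g * g else 0)) +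
       (\<Sum>g\<in>F1 \<union> F2. (if g \<in> F2 then q2 g * g else 0))"
    unfolding sum.distrib[symmetric] by (rule sum.cong) (simp_all add: q_def distrib_right)
  also have "\<dots> = a + b"
  proof -
    have fin: "finite (F1 \<union> F2)" using 1 2 by simp
    have "(\<Sum>g\<in>F1 \<union> F2. (if g \<in> F1 then q1 g * g else 0)) = (\<Sum>g\<in>(F1 \<union> F2) \<inter> F1. q1 g * g)"
      by (rule sum.inter_restrict[OF fin, symmetric])
    moreover have "(\<Sum>g\<in>F1 \<union> F2. (if g \<in> F2 then q2 g * g else 0)) = (\<Sum>g\<in>(F1 \<union> F2) \<inter> F2. q2 g * g)"
      by (rule sum.inter_restrict[OF fin, symmetric])
    moreover have "(F1 \<union> F2) \<inter> F1 = F1" "(F1 \<union> F2) \<inter> F2 = F2" by blast+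
    ultimately show ?thesis using 1 2 by simp
  qed
  finally have "a + b = (\<Sum>g\<in>F1 \<union> F2. q g * g)" by simp
  moreover have "\<forall>g\<in>F1 \<union> F2. q g \<in> Pring n"
    using 1 2 by (auto simp: q_def intro!: Pring_add Pring_zero)
  ultimately show ?thesis using 1 2 unfolding gen_ideal_iff by (intro exI[of _ "F1 \<union> F2"] exI[of _ q]) auto
qed

lemma gen_ideal_mult:
  assumes r: "r \<in> Pring n" and a: "a \<in> gen_ideal n G"
  shows "r * a \<in> gen_ideal n G"
proof -
  obtain F q where 1: "a = (\<Sum>g\<in>F. q g * g)" "finite F" "F \<subseteq> G" "\<forall>g\<in>F. q g \<in> Pring n"
    using a unfolding gen_ideal_iff by blast
  have "r * a = (\<Sum>g\<in>F. (r * q g) * g)" using 1 by (simp add: sum_distrib_left mult.assoc)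
  moreover have "\<forall>g\<in>F. r * q g \<in> Pring n" using 1 r by (simp add: Pring_mult)
  ultimately show ?thesis using 1 unfolding gen_ideal_iff by (intro exI[of _ F] exI[of _ "\<lambda>g. r * q g"]) auto
qed

lemma gen_ideal_uminus: "a \<in> gen_ideal n G \<Longrightarrow> - a \<in> gen_ideal n G"
  using gen_ideal_mult[OF Pring_uminus[OF Pring_one]] by fastforce

lemma gen_ideal_diff: "a \<in> gen_ideal n G \<Longrightarrow> b \<in> gen_ideal n G \<Longrightarrow> a - b \<in> gen_ideal n G"
  using gen_ideal_add[of a n G "- b"] gen_ideal_uminus[of b n G] by simp

lemma gen_ideal_sum: "(\<And>x. x \<in> A \<Longrightarrow> f x \<in> gen_ideal n G) \<Longrightarrow> sum f A \<in> gen_ideal n G"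
  by (induction A rule: infinite_finite_induct) (simp_all add: gen_ideal_zero gen_ideal_add)

lemma gen_ideal_Pring: "G \<subseteq> Pring n \<Longrightarrow> gen_ideal n G \<subseteq> Pring n"
proof
  fix f assume G: "G \<subseteq> Pring n" and "f \<in> gen_ideal n G"
  then obtain F q where 1: "f = (\<Sum>g\<in>F. q g * g)" "finite F" "F \<subseteq> G" "\<forall>g\<in>F. q g \<in> Pring n"
    unfolding gen_ideal_iff by blast
  show "f \<in> Pring n" unfolding 1(1) using 1 G by (intro Pring_sum Pring_mult) auto
qed

lemma gen_ideal_mono2: "X \<subseteq> gen_ideal n Y \<Longrightarrow> gen_ideal n X \<subseteq> gen_ideal n Y"
proof
  fix f assume X: "X \<subseteq> gen_ideal n Y" and "f \<in> gen_ideal n X"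
  then obtain F q where 1: "f = (\<Sum>g\<in>F. q g * g)" "finite F" "F \<subseteq> X" "\<forall>g\<in>F. q g \<in> Pring n"
    unfolding gen_ideal_iff by blast
  show "f \<in> gen_ideal n Y" unfolding 1(1) using 1 X by (intro gen_ideal_sum gen_ideal_mult) auto
qed

lemma gen_ideal_mono: "X \<subseteq> Y \<Longrightarrow> gen_ideal n X \<subseteq> gen_ideal n Y"
  unfolding gen_ideal_def by blast

definition gens :: "nat \<Rightarrow> 'a::comm_ring_1 mpoly set" where
  "gens n = (\<lambda>i. var i ^ 2) ` {1..n} \<union> {lin n ^ 2}"

lemma In_ideal_gens: "In_ideal n = gen_ideal n (gens n)"
  by (simp add: In_ideal_def gens_def lin_def)

lemma gens_Pring: "gens n \<subseteq> (Pring n :: 'a::comm_ring_1 mpoly set)"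
  unfolding gens_def by (auto intro!: Pring_pow2 Pring_var Pring_lin)

lemma In_ideal_Pring: "In_ideal n \<subseteq> (Pring n :: 'a::comm_ring_1 mpoly set)"
  unfolding In_ideal_gens by (rule gen_ideal_Pring[OF gens_Pring])

lemma var_sq: "(var i :: 'a::comm_ring_1 mpoly) ^ 2 = Poly_Mapping.single (Poly_Mapping.single i 2) 1"
proof -
  have "Poly_Mapping.single i (1::nat) + Poly_Mapping.single i 1 = Poly_Mapping.single i 2"
    by (metis one_add_one single_add)
  then show ?thesis by (simp add: power2_eq_square var_def mon_def mult_single)
qed

lemma poly_expand: "p = (\<Sum>m\<in>Poly_Mapping.keys p. Poly_Mapping.single m (Poly_Mapping.lookup p m))"
proof (rule poly_mapping_eqI)
  fix k
  show "Poly_Mapping.lookup p k = Poly_Mapping.lookup (\<Sum>m\<in>Poly_Mapping.keys p. Poly_Mapping.single m (Poly_Mapping.lookup p m)) k"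
    by (simp add: lookup_sum lookup_single when_def sum.delta in_keys_iff)
qed

lemma nonsqf_in_ideal:
  assumes r: "r \<in> Pring n" and ns: "\<forall>m\<in>Poly_Mapping.keys r. \<not> sqf m"
  shows "(r::'a::comm_ring_1 mpoly) \<in> In_ideal n"
proof -
  have "Poly_Mapping.single m (Poly_Mapping.lookup r m) \<in> In_ideal n" if m: "m \<in> Poly_Mapping.keys r" for m
  proof -
    have "\<not> sqf m" using ns m by blast
    then obtain i where "\<not> Poly_Mapping.lookup m i \<le> 1" unfolding sqf_def by blast
    then have i: "Poly_Mapping.lookup m i \<ge> 2" by simp
    have "i \<in> Poly_Mapping.keys m" using i by (simp add: in_keys_iff)
    then have iin: "i \<in> {1..n}" using r m unfolding Pring_iff by blast
    define m' where "m' = m - Poly_Mapping.single i 2"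
    have mm: "m' + Poly_Mapping.single i 2 = m"
      by (rule poly_mapping_eqI) (use i in \<open>auto simp: m'_def lookup_add lookup_minus lookup_single when_def\<close>)
    have "Poly_Mapping.keys m' \<subseteq> Poly_Mapping.keys m"
      by (auto simp: m'_def in_keys_iff lookup_minus)
    then have m'P: "Poly_Mapping.single m' (Poly_Mapping.lookup r m) \<in> Pring n"
    proof -
      have "Poly_Mapping.keys m \<subseteq> {1..n}" using r m unfolding Pring_iff by blast
      then show ?thesis using \<open>Poly_Mapping.keys m' \<subseteq> Poly_Mapping.keys m\<close> by (intro Pring_single) blast
    qed
    have "Poly_Mapping.single m (Poly_Mapping.lookup r m) = Poly_Mapping.single m' (Poly_Mapping.lookup r m) * var i ^ 2"
      by (simp add: var_sq mult_single mm)
    moreover have "var i ^ 2 \<in> In_ideal n" unfolding In_ideal_gens gens_def using iin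
      by (intro gen_ideal_gen) blast
    ultimately show ?thesis using gen_ideal_mult[OF m'P] unfolding In_ideal_gens by simp
  qed
  then have "(\<Sum>m\<in>Poly_Mapping.keys r. Poly_Mapping.single m (Poly_Mapping.lookup r m)) \<in> In_ideal n"
    unfolding In_ideal_gens by (intro gen_ideal_sum) simp
  then show ?thesis using poly_expand[of r] by simp
qed

lemma not_sqf_single2: "\<not> sqf (Poly_Mapping.single i 2)"
  unfolding sqf_def
proof
  assume "\<forall>j. Poly_Mapping.lookup (Poly_Mapping.single i (2::nat)) j \<le> 1"
  then have "Poly_Mapping.lookup (Poly_Mapping.single i (2::nat)) i \<le> 1" by blast
  then show False by simp
qed

lemma sf_In_ideal:
  assumes f: "f \<in> In_ideal n"
  shows "\<exists>\<phi>. sf (f::'a::field_char_0 mpoly) = E n ((Lop ^^ 2) \<phi>)"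
proof -
  obtain F q where 1: "f = (\<Sum>g\<in>F. q g * g)" "finite F" "F \<subseteq> gens n" "\<forall>g\<in>F. q g \<in> Pring n"
    using f unfolding In_ideal_gens gen_ideal_iff by blast
  have "sf (q g * g) = (if g = lin n ^ 2 then E n ((Lop ^^ 2) (\<lambda>S. Poly_Mapping.lookup (q g) (chi S))) else 0)"
    if g: "g \<in> F" for g
  proof (cases "g = lin n ^ 2")
    case True
    then show ?thesis using sf_lin2[of "q g" n] 1(4) g by (simp add: mult.commute)
  next
    case False
    then obtain i where "g = var i ^ 2" using g 1(3) unfolding gens_def by blast
    then have "sf (q g * g) = 0" by (intro sf_mult_zero) (simp add: var_sq not_sqf_single2)
    then show ?thesis using False by simp
  qed
  then have "sf f = (\<Sum>g\<in>F. if g = lin n ^ 2 then E n ((Lop ^^ 2) (\<lambda>S. Poly_Mapping.lookup (q g) (chi S))) else 0)"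
    unfolding 1(1) sf_sum by (rule sum.cong[OF refl])
  also have "\<dots> = (if lin n ^ 2 \<in> F then E n ((Lop ^^ 2) (\<lambda>S. Poly_Mapping.lookup (q (lin n ^ 2)) (chi S))) else 0)"
    using 1(2) by (simp add: sum.delta)
  finally show ?thesis
    by (cases "lin n ^ 2 \<in> F") (auto simp: Lpow_zero E_zero intro: exI[of _ "\<lambda>S. 0"])
qed

section \<open>Leading monomials\<close>

lemma drl_chi_iff:
  assumes "finite T" "finite S" "card T = card S"
  shows "drl_less (chi T) (chi S) \<longleftrightarrow> set_less T S"
proof -
  have A: "(Poly_Mapping.lookup (chi S) i < Poly_Mapping.lookup (chi T) i) \<longleftrightarrow> (i \<in> T - S)" for i
    using assms by (simp add: lookup_chi)
  have B: "(Poly_Mapping.lookup (chi T) k = Poly_Mapping.lookup (chi S) k) \<longleftrightarrow> (k \<in> T \<longleftrightarrow> k \<in> S)" for k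
    using assms by (simp add: lookup_chi)
  have C: "tdeg (chi T) = tdeg (chi S)" using assms by (simp add: tdeg_chi)
  show ?thesis unfolding drl_less_iff drl'_def set_less_def A B C by auto
qed

lemma tdeg_sqf: "sqf m \<Longrightarrow> tdeg m = card (Poly_Mapping.keys m)"
  using tdeg_chi[of "Poly_Mapping.keys m"] sqf_eq_chi[of m] by simp

lemma sf_lookup_sqf: "sqf m \<Longrightarrow> Poly_Mapping.lookup (sf p) m = Poly_Mapping.lookup p m"
  by (simp add: lookup_sf)

lemma Pring_diff: "p \<in> Pring n \<Longrightarrow> q \<in> Pring n \<Longrightarrow> (p::'a::comm_ring_1 mpoly) - q \<in> Pring n"
  using Pring_add[of p n "- q"] Pring_uminus[of q n] by simp

lemma sf_poly_in_ideal:
  assumes h: "h \<in> Pring n"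
  shows "sf (lin n ^ 2 * h) \<in> (In_ideal n :: 'a::field_char_0 mpoly set)"
proof -
  define p where "p = lin n ^ 2 * (h :: 'a mpoly)"
  have pP: "p \<in> Pring n" unfolding p_def by (intro Pring_mult Pring_pow2 Pring_lin h)
  have pI: "p \<in> In_ideal n" unfolding p_def In_ideal_gens
    using gen_ideal_mult[OF h gen_ideal_gen[of "lin n ^ 2" "gens n" n]] by (simp add: gens_def mult.commute)
  have sfP: "sf p \<in> Pring n" unfolding p_def using sf_lin2[OF h] E_Pring by simp
  have "p - sf p \<in> In_ideal n"
  proof (rule nonsqf_in_ideal)
    show "p - sf p \<in> Pring n" using pP sfP by (rule Pring_diff)
    show "\<forall>m\<in>Poly_Mapping.keys (p - sf p). \<not> sqf m"
      by (auto simp: in_keys_iff lookup_minus lookup_sf)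
  qed
  then have "p - (p - sf p) \<in> In_ideal n" using pI unfolding In_ideal_gens by (rule gen_ideal_diff[rotated])
  then show ?thesis by (simp add: p_def)
qed

lemma lead_D:
  assumes k: "2 \<le> k" "2*k-2 \<le> n" and S: "S \<subseteq> {1..2*k-2}" "card S = k"
  shows "\<exists>f\<in>(In_ideal n :: 'a::field_char_0 mpoly set). f \<noteq> 0 \<and> lead_monom f = chi S"
proof -
  have finS: "finite S" using S finite_subset by blast
  obtain \<phi> :: "nat set \<Rightarrow> 'a" where \<phi>: "\<forall>T\<subseteq>{1..2*k-2}. card T = (k - 2) + 2 \<longrightarrow> (Lop ^^ 2) \<phi> T = (if T = S then 1 else 0)"
  proof -
    have "2*k-2 \<le> 2*(k-2) + 2" using k by linarith
    then show ?thesis using that Lpow_surj[of "2*k-2" "k - 2" 2 "\<lambda>T. if T = S then 1 else 0"] by blast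
  qed
  define \<phi>' where "\<phi>' = (\<lambda>T. if T \<subseteq> {1..2*k-2} \<and> card T = k - 2 then \<phi> T else 0)"
  define h where "h = (E n \<phi>' :: 'a mpoly)"
  define \<psi> where "\<psi> = (Lop ^^ 2) (\<lambda>U. Poly_Mapping.lookup h (chi U))"
  define f where "f = sf (lin n ^ 2 * h)"
  have hP: "h \<in> Pring n" unfolding h_def by (rule E_Pring)
  have fE: "f = E n \<psi>" unfolding f_def \<psi>_def by (rule sf_lin2[OF hP])
  have fI: "f \<in> In_ideal n" unfolding f_def by (rule sf_poly_in_ideal[OF hP])
  have \<psi>\<phi>': "\<psi> T = (Lop ^^ 2) \<phi>' T" if T: "T \<subseteq> {1..n}" for T
  proof -
    have "finite T" using T finite_subset by blast
    then show ?thesis unfolding \<psi>_def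
      by (rule Lpow_loc) (use T in \<open>auto simp: h_def lookup_E_chi\<close>)
  qed
  have Sn: "S \<subseteq> {1..n}" using S k by auto
  have keyS: "Poly_Mapping.lookup f (chi S) = 1"
  proof -
    have "Poly_Mapping.lookup f (chi S) = (Lop ^^ 2) \<phi>' S" using fE Sn \<psi>\<phi>' by (simp add: lookup_E_chi)
    also have "\<dots> = (Lop ^^ 2) \<phi> S"
    proof (rule Lpow_loc[OF finS])
      fix U assume "U \<subseteq> S" "card U + 2 = card S"
      then show "\<phi>' U = \<phi> U" using S unfolding \<phi>'_def by auto
    qed
    also have "\<dots> = 1" using \<phi> S k by auto
    finally show ?thesis .
  qed
  have others: "drl_less m' (chi S)" if m': "m' \<in> Poly_Mapping.keys f" "m' \<noteq> chi S" for m'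
  proof -
    have nz: "Poly_Mapping.lookup f m' \<noteq> 0" using m' by (simp add: in_keys_iff)
    then have sq: "sqf m'" and Tn: "Poly_Mapping.keys m' \<subseteq> {1..n}" and \<psi>T: "\<psi> (Poly_Mapping.keys m') \<noteq> 0"
      using fE by (simp_all add: lookup_E split: if_splits)
    define T where "T = Poly_Mapping.keys m'"
    have finT: "finite T" unfolding T_def by simp
    have mT: "m' = chi T" unfolding T_def by (rule sqf_eq_chi[OF sq])
    have TS: "T \<noteq> S" using m' mT by auto
    have LT: "(Lop ^^ 2) \<phi>' T \<noteq> 0" using \<psi>T \<psi>\<phi>' Tn T_def by simp
    have cT: "card T = k"
    proof (rule ccontr)
      assume ne: "card T \<noteq> k"
      have "(Lop ^^ 2) \<phi>' T = (Lop ^^ 2) (\<lambda>U. 0) T"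
      proof (rule Lpow_loc[OF finT])
        fix U assume "U \<subseteq> T" "card U + 2 = card T"
        then have "card U \<noteq> k - 2" using ne k by auto
        then show "\<phi>' U = 0" by (simp add: \<phi>'_def)
      qed
      then show False using LT by (simp add: Lpow_zero)
    qed
    have "\<not> T \<subseteq> {1..2*k-2}"
    proof
      assume T2: "T \<subseteq> {1..2*k-2}"
      have "(Lop ^^ 2) \<phi>' T = (Lop ^^ 2) \<phi> T"
      proof (rule Lpow_loc[OF finT])
        fix U assume "U \<subseteq> T" "card U + 2 = card T"
        then show "\<phi>' U = \<phi> U" using T2 cT unfolding \<phi>'_def by auto
      qed
      also have "\<dots> = 0" using \<phi> T2 cT TS k by auto
      finally show False using LT by simp
    qed
    then obtain x where x: "x \<in> T" "x \<notin> {1..2*k-2}" by blast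
    have x2: "x > 2*k-2" using x Tn T_def by auto
    have "T \<noteq> {}" using x by auto
    have MT: "Max T \<in> T" "x \<le> Max T" using finT x \<open>T \<noteq> {}\<close> by auto
    have "set_less T S" unfolding set_less_def
    proof (intro bexI[of _ "Max T"] allI impI)
      show "Max T \<in> T - S" using MT x2 S by auto
      fix j assume "j > Max T"
      then have "j \<notin> T" using Max_ge[OF finT] by (meson leD)
      moreover have "j \<notin> S" using \<open>j > Max T\<close> MT x2 S by auto
      ultimately show "(j \<in> T) = (j \<in> S)" by simp
    qed
    then show ?thesis using drl_chi_iff[OF finT finS] cT S mT by simp
  qed
  have "chi S \<in> Poly_Mapping.keys f" using keyS by (simp add: in_keys_iff)
  then have "lead_monom f = chi S" using others by (intro lead_monom_eqI) auto
  moreover have "f \<noteq> 0" using keyS by auto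
  ultimately show ?thesis using fI by blast
qed

lemma NS_to_D:
  assumes S: "S \<subseteq> {1..n}" and ns: "\<exists>k\<ge>2. k \<le> card (S \<inter> {1..2*k-2})"
  shows "\<exists>k. 2 \<le> k \<and> 2*k-2 \<le> n \<and> (\<exists>m\<in>D k. mdvd m (chi S))"
proof -
  define P where "P = (\<lambda>k. 2 \<le> k \<and> k \<le> card (S \<inter> {1..2*k-2}))"
  define k0 where "k0 = (LEAST k. P k)"
  have finS: "finite S" using S finite_subset by blast
  obtain kk where "P kk" using ns P_def by blast
  then have P0: "P k0" unfolding k0_def by (rule LeastI)
  have notP: "\<not> P k" if "k < k0" for k using that not_less_Least unfolding k0_def by blast
  have cSn: "card S \<le> n" using card_le_m[OF S] .
  have bound: "2*k0-2 \<le> n"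
  proof (rule ccontr)
    assume nb: "\<not> 2*k0-2 \<le> n"
    show False
    proof (cases "k0 = 2")
      case True
      then have "2 \<le> card (S \<inter> {1..2})" using P0 P_def by simp
      moreover have "card (S \<inter> {1..2}) \<le> card S" using finS by (intro card_mono) auto
      ultimately show False using cSn nb True by simp
    next
      case False
      then have k3: "k0 \<ge> 3" using P0 P_def by simp
      have "\<not> P (k0 - 1)" using notP k3 by simp
      moreover have "2 \<le> k0 - 1" using k3 by simp
      ultimately have lt: "card (S \<inter> {1..2*(k0-1)-2}) < k0 - 1" unfolding P_def by simp
      have "S \<inter> {1..2*k0-2} \<subseteq> insert (2*k0-3) (S \<inter> {1..2*(k0-1)-2})"
      proof
        fix x assume "x \<in> S \<inter> {1..2*k0-2}"
        then have "x \<in> S" "1 \<le> x" "x \<le> n" using S by auto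
        then show "x \<in> insert (2*k0-3) (S \<inter> {1..2*(k0-1)-2})" using nb k3 by auto
      qed
      then have "card (S \<inter> {1..2*k0-2}) \<le> card (insert (2*k0-3) (S \<inter> {1..2*(k0-1)-2}))"
        by (intro card_mono) auto
      also have "\<dots> \<le> Suc (card (S \<inter> {1..2*(k0-1)-2}))" by (simp add: card_insert_le_m1)
      moreover have "k0 \<le> card (S \<inter> {1..2*k0-2})" using P0 P_def by simp
      ultimately show False using lt by linarith
    qed
  qed
  obtain T where T: "T \<subseteq> S \<inter> {1..2*k0-2}" "card T = k0" "finite T"
  proof -
    have "k0 \<le> card (S \<inter> {1..2*k0-2})" using P0 P_def by simp
    then show ?thesis using that obtain_subset_with_card_n by blast
  qed
  have inD: "chi T \<in> D k0"
    unfolding D_def sqfree_monoms_def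
  proof (intro CollectI conjI notI)
    show "Poly_Mapping.keys (chi T) \<subseteq> {1..2*k0-2}" using T by (simp add: keys_chi)
    show "\<forall>i. Poly_Mapping.lookup (chi T) i \<le> 1" using T by (simp add: lookup_chi)
    show "tdeg (chi T) = k0" using T by (simp add: tdeg_chi)
  next
    assume "\<exists>k'. 2 \<le> k' \<and> k' < k0 \<and> (\<exists>m'\<in>{m. Poly_Mapping.keys m \<subseteq> {1..2 * k' - 2} \<and>
         (\<forall>i. Poly_Mapping.lookup m i \<le> 1) \<and> tdeg m = k'}. mdvd m' (chi T))"
    then obtain k' m' where k': "2 \<le> k'" "k' < k0" "Poly_Mapping.keys m' \<subseteq> {1..2 * k' - 2}"
      "\<forall>i. Poly_Mapping.lookup m' i \<le> 1" "tdeg m' = k'" "mdvd m' (chi T)" by blast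
    have "Poly_Mapping.keys m' \<subseteq> T"
    proof
      fix i assume "i \<in> Poly_Mapping.keys m'"
      then have "Poly_Mapping.lookup m' i \<noteq> 0" by (simp add: in_keys_iff)
      moreover have "Poly_Mapping.lookup m' i \<le> Poly_Mapping.lookup (chi T) i" using k'(6) by (simp add: mdvd_def)
      ultimately show "i \<in> T" using T by (auto simp: lookup_chi split: if_splits)
    qed
    then have "Poly_Mapping.keys m' \<subseteq> S \<inter> {1..2*k'-2}" using k'(3) T by auto
    then have "card (Poly_Mapping.keys m') \<le> card (S \<inter> {1..2*k'-2})" using finS by (intro card_mono) auto
    moreover have "card (Poly_Mapping.keys m') = k'" using k'(4,5) tdeg_sqf[of m'] by (simp add: sqf_def)
    ultimately have "P k'" using k' P_def by simp
    then show False using notP k' by blast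
  qed
  have "mdvd (chi T) (chi S)" using T finS by (auto simp: mdvd_def lookup_chi)
  then show ?thesis using inD bound P0 P_def by (intro exI[of _ k0]) auto
qed

lemma lead_B:
  assumes f: "f \<in> (In_ideal n :: 'a::field_char_0 mpoly set)" and nz: "f \<noteq> 0"
  shows "Poly_Mapping.keys (lead_monom f) \<subseteq> {1..n} \<and>
    ((\<exists>i\<in>{1..n}. mdvd (Poly_Mapping.single i 2) (lead_monom f)) \<or>
     (\<exists>k. 2 \<le> k \<and> 2*k-2 \<le> n \<and> (\<exists>m\<in>D k. mdvd m (lead_monom f))))"
proof -
  define L where "L = lead_monom f"
  have L: "L \<in> Poly_Mapping.keys f" "\<forall>m'\<in>Poly_Mapping.keys f. m' \<noteq> L \<longrightarrow> drl_less m' L"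
    using lead_monom_prop[OF nz] L_def by auto
  have fP: "f \<in> Pring n" using f In_ideal_Pring by blast
  have Ln: "Poly_Mapping.keys L \<subseteq> {1..n}" using fP L unfolding Pring_iff by blast
  have "(\<exists>i\<in>{1..n}. mdvd (Poly_Mapping.single i 2) L) \<or>
     (\<exists>k. 2 \<le> k \<and> 2*k-2 \<le> n \<and> (\<exists>m\<in>D k. mdvd m L))"
  proof (cases "sqf L")
    case False
    then obtain i where "\<not> Poly_Mapping.lookup L i \<le> 1" unfolding sqf_def by blast
    then have i: "Poly_Mapping.lookup L i \<ge> 2" by simp
    then have "i \<in> Poly_Mapping.keys L" by (simp add: in_keys_iff)
    then have "i \<in> {1..n}" using Ln by blast
    moreover have "mdvd (Poly_Mapping.single i 2) L" using i by (auto simp: mdvd_def lookup_single when_def)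
    ultimately show ?thesis by blast
  next
    case True
    define S where "S = Poly_Mapping.keys L"
    have LS: "L = chi S" unfolding S_def by (rule sqf_eq_chi[OF True])
    have finS: "finite S" unfolding S_def by simp
    have Sn: "S \<subseteq> {1..n}" using Ln S_def by simp
    obtain \<phi> where \<phi>: "sf f = E n ((Lop ^^ 2) \<phi>)" using sf_In_ideal[OF f] by blast
    have "(Lop ^^ 2) \<phi> S \<noteq> 0"
    proof -
      have "(Lop ^^ 2) \<phi> S = Poly_Mapping.lookup (sf f) (chi S)" using \<phi> Sn by (simp add: lookup_E_chi)
      also have "\<dots> = Poly_Mapping.lookup f L" using LS True by (simp add: lookup_sf)
      finally show ?thesis using L(1) by (simp add: in_keys_iff)
    qed
    moreover have "\<forall>T\<subseteq>{1..n}. card T = card S \<longrightarrow> T \<noteq> S \<longrightarrow> (Lop ^^ 2) \<phi> T \<noteq> 0 \<longrightarrow> set_less T S"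
    proof (intro allI impI)
      fix T assume T: "T \<subseteq> {1..n}" "card T = card S" "T \<noteq> S" "(Lop ^^ 2) \<phi> T \<noteq> 0"
      have finT: "finite T" using T finite_subset by blast
      have "Poly_Mapping.lookup f (chi T) = Poly_Mapping.lookup (sf f) (chi T)"
        using finT by (simp add: lookup_sf sqf_chi)
      also have "\<dots> = (Lop ^^ 2) \<phi> T" using \<phi> T by (simp add: lookup_E_chi)
      finally have "chi T \<in> Poly_Mapping.keys f" using T by (simp add: in_keys_iff)
      moreover have "chi T \<noteq> L" using LS T finT finS keys_chi by metis
      ultimately have "drl_less (chi T) (chi S)" using L(2) LS by simp
      then show "set_less T S" using drl_chi_iff[OF finT finS T(2)] by simp
    qed
    ultimately have "\<exists>k\<ge>2. k \<le> card (S \<inter> {1..2*k-2})" using Lpow_nonstd[OF Sn] by blast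
    then show ?thesis using NS_to_D[OF Sn] LS by simp
  qed
  then show ?thesis using Ln L_def by simp
qed

section \<open>Minimality\<close>

lemma mon_inj: "(mon a :: 'a::comm_ring_1 mpoly) = mon b \<Longrightarrow> a = b"
  unfolding mon_def by (metis inj_single injD lookup_single_eq lookup_single_not_eq zero_neq_one)

lemma keys_mon: "Poly_Mapping.keys (mon m :: 'a::comm_ring_1 mpoly) = {m}"
  by (simp add: mon_def)

lemma gen_ideal_mon_dvd:
  assumes p: "p \<in> gen_ideal n ((mon :: monom \<Rightarrow> 'a::comm_ring_1 mpoly) ` M)" and k: "k \<in> Poly_Mapping.keys p"
  shows "\<exists>m\<in>M. mdvd m k"
proof -
  obtain F q where 1: "p = (\<Sum>g\<in>F. q g * g)" "finite F" "F \<subseteq> mon ` M" "\<forall>g\<in>F. q g \<in> Pring n"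
    using p unfolding gen_ideal_iff by blast
  have "k \<in> (\<Union>g\<in>F. Poly_Mapping.keys (q g * g))" using k keys_sum[of "\<lambda>g. q g * g" F] 1(1) by blast
  then obtain g where g: "g \<in> F" "k \<in> Poly_Mapping.keys (q g * g)" by blast
  then obtain m where m: "m \<in> M" "g = mon m" using 1(3) by blast
  then obtain a b where "k = a + b" "b \<in> Poly_Mapping.keys (mon m :: 'a mpoly)" using g keys_mult by blast
  then have "k = a + m" by (simp add: keys_mon)
  then have "mdvd m k" by (simp add: mdvd_def lookup_add)
  then show ?thesis using m by blast
qed

lemma mdvd_keys: "mdvd a b \<Longrightarrow> Poly_Mapping.keys a \<subseteq> Poly_Mapping.keys b"
proof
  fix x assume ab: "mdvd a b" and x: "x \<in> Poly_Mapping.keys a"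
  have "Poly_Mapping.lookup a x \<le> Poly_Mapping.lookup b x" using ab by (simp add: mdvd_def)
  moreover have "Poly_Mapping.lookup a x \<noteq> 0" using x by (simp add: in_keys_iff)
  ultimately show "x \<in> Poly_Mapping.keys b" by (simp add: in_keys_iff)
qed

lemma mdvd_tdeg: "mdvd a b \<Longrightarrow> tdeg a \<le> tdeg b"
proof -
  assume ab: "mdvd a b"
  have "tdeg a = (\<Sum>i\<in>Poly_Mapping.keys b. Poly_Mapping.lookup a i)"
    by (rule tdeg_sum) (simp_all add: mdvd_keys[OF ab])
  also have "\<dots> \<le> (\<Sum>i\<in>Poly_Mapping.keys b. Poly_Mapping.lookup b i)"
    using ab by (intro sum_mono) (simp add: mdvd_def)
  finally show ?thesis by (simp add: tdeg_def)
qed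

lemma D_props: "m \<in> D k \<Longrightarrow> sqf m \<and> tdeg m = k \<and> Poly_Mapping.keys m \<subseteq> {1..2*k-2} \<and> m \<in> sqfree_monoms k (2*k-2)"
  unfolding D_def sqfree_monoms_def sqf_def by blast

definition Mset :: "nat \<Rightarrow> monom set" where
  "Mset n = (\<lambda>i. Poly_Mapping.single i 2) ` {1..n} \<union> (\<Union>k\<in>{k. 2 \<le> k \<and> 2*k-2 \<le> n}. D k)"

lemma lookup_single2_sqf: "sqf b \<Longrightarrow> \<not> mdvd (Poly_Mapping.single i 2) b"
  unfolding sqf_def mdvd_def
proof
  assume "\<forall>i. Poly_Mapping.lookup b i \<le> 1" "\<forall>j. Poly_Mapping.lookup (Poly_Mapping.single i (2::nat)) j \<le> Poly_Mapping.lookup b j"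
  then have "Poly_Mapping.lookup (Poly_Mapping.single i (2::nat)) i \<le> 1" by (meson order_trans)
  then show False by simp
qed

lemma antichain:
  assumes a: "a \<in> Mset n" and b: "b \<in> Mset n" and ab: "mdvd a b"
  shows "a = b"
proof -
  consider (ss) i j where "a = Poly_Mapping.single i 2" "b = Poly_Mapping.single j 2"
    | (sd) i k where "a = Poly_Mapping.single i 2" "b \<in> D k"
    | (ds) k j where "a \<in> D k" "b = Poly_Mapping.single j 2" "2 \<le> k"
    | (dd) k1 k2 where "a \<in> D k1" "b \<in> D k2"
    using a b unfolding Mset_def by blast
  then show ?thesis
  proof cases
    case ss
    have "Poly_Mapping.lookup a i \<le> Poly_Mapping.lookup b i" using ab by (simp add: mdvd_def)
    then have "i = j" using ss by (auto simp: lookup_single when_def split: if_splits)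
    then show ?thesis using ss by simp
  next
    case sd
    then show ?thesis using ab lookup_single2_sqf D_props by blast
  next
    case ds
    have "Poly_Mapping.keys a \<subseteq> {j}" using mdvd_keys[OF ab] ds by simp
    then have "card (Poly_Mapping.keys a) \<le> 1" using card_mono[of "{j}"] by fastforce
    moreover have "card (Poly_Mapping.keys a) = k"
    proof -
      have "sqf a" "tdeg a = k" using D_props[OF ds(1)] by auto
      then show ?thesis using tdeg_sqf[of a] by simp
    qed
    ultimately show ?thesis using ds by simp
  next
    case dd
    have A: "sqf a" "tdeg a = k1" "a \<in> sqfree_monoms k1 (2*k1-2)" using D_props[OF dd(1)] by auto
    have B: "sqf b" "tdeg b = k2" using D_props[OF dd(2)] by auto
    have "k1 \<ge> 2" using dd(1) a unfolding Mset_def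
      by (auto simp: D_def sqfree_monoms_def dest: D_props)
    have le: "k1 \<le> k2" using mdvd_tdeg[OF ab] A B by simp
    show ?thesis
    proof (cases "k1 = k2")
      case False
      then have "k1 < k2" using le by simp
      then show ?thesis using dd(2) A(3) ab \<open>k1 \<ge> 2\<close> unfolding D_def by blast
    next
      case True
      have "Poly_Mapping.keys a \<subseteq> Poly_Mapping.keys b" by (rule mdvd_keys[OF ab])
      moreover have "card (Poly_Mapping.keys a) = card (Poly_Mapping.keys b)"
        using A B True tdeg_sqf by simp
      ultimately have "Poly_Mapping.keys a = Poly_Mapping.keys b" by (intro card_subset_eq) simp_all
      then show ?thesis using sqf_eq_chi[OF A(1)] sqf_eq_chi[OF B(1)] by simp
    qed
  qed
qed

lemma main_aux:
  "minimal_generators n ((mon :: monom \<Rightarrow> 'a::field_char_0 mpoly) ` Mset n)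
     (initial_ideal n (In_ideal n :: 'a mpoly set))"
proof -
  define G where "G = (mon :: monom \<Rightarrow> 'a mpoly) ` Mset n"
  define LM where "LM = {(mon (lead_monom f) :: 'a mpoly) | f. f \<in> (In_ideal n :: 'a mpoly set) \<and> f \<noteq> 0}"
  have J: "initial_ideal n (In_ideal n :: 'a mpoly set) = gen_ideal n LM"
    unfolding initial_ideal_def LM_def ..
  have GLM: "G \<subseteq> LM"
  proof
    fix g assume "g \<in> G"
    then obtain m where m: "m \<in> Mset n" "g = mon m" unfolding G_def by blast
    have "\<exists>f\<in>(In_ideal n :: 'a mpoly set). f \<noteq> 0 \<and> lead_monom f = m"
      using m(1) unfolding Mset_def
    proof (elim UnE)
      assume "m \<in> (\<lambda>i. Poly_Mapping.single i 2) ` {1..n}"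
      then obtain i where i: "i \<in> {1..n}" "m = Poly_Mapping.single i 2" by blast
      have fI: "(var i :: 'a mpoly) ^ 2 \<in> In_ideal n" unfolding In_ideal_gens gens_def using i
        by (intro gen_ideal_gen) blast
      have "Poly_Mapping.keys ((var i :: 'a mpoly) ^ 2) = {m}" using i by (simp add: var_sq)
      then have "lead_monom ((var i :: 'a mpoly) ^ 2) = m" by (intro lead_monom_eqI) auto
      moreover have "(var i :: 'a mpoly) ^ 2 \<noteq> 0" unfolding var_sq
        by (metis lookup_single_eq lookup_zero one_neq_zero)
      ultimately show ?thesis using fI by blast
    next
      assume "m \<in> (\<Union>k\<in>{k. 2 \<le> k \<and> 2*k-2 \<le> n}. D k)"
      then obtain k where k: "2 \<le> k" "2*k-2 \<le> n" "m \<in> D k" by blast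
      have P: "sqf m" "tdeg m = k" "Poly_Mapping.keys m \<subseteq> {1..2*k-2}" using D_props[OF k(3)] by auto
      have "card (Poly_Mapping.keys m) = k" using P tdeg_sqf by simp
      then obtain f where "f\<in>(In_ideal n :: 'a mpoly set)" "f \<noteq> 0" "lead_monom f = chi (Poly_Mapping.keys m)"
        using lead_D[OF k(1,2) P(3)] by blast
      then show ?thesis using sqf_eq_chi[OF P(1)] by auto
    qed
    then show "g \<in> LM" unfolding LM_def using m by auto
  qed
  have LMG: "LM \<subseteq> gen_ideal n G"
  proof
    fix x assume "x \<in> LM"
    then obtain f where f: "f \<in> (In_ideal n :: 'a mpoly set)" "f \<noteq> 0" "x = mon (lead_monom f)"
      unfolding LM_def by blast
    define L where "L = lead_monom f"
    have B: "Poly_Mapping.keys L \<subseteq> {1..n}"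
      "(\<exists>i\<in>{1..n}. mdvd (Poly_Mapping.single i 2) L) \<or> (\<exists>k. 2 \<le> k \<and> 2*k-2 \<le> n \<and> (\<exists>m\<in>D k. mdvd m L))"
      using lead_B[OF f(1,2)] L_def by auto
    obtain m' where m': "m' \<in> Mset n" "mdvd m' L"
      using B(2) unfolding Mset_def by blast
    have eqL: "(L - m') + m' = L"
      by (rule poly_mapping_eqI) (use m'(2) in \<open>simp add: lookup_add lookup_minus mdvd_def\<close>)
    have "Poly_Mapping.keys (L - m') \<subseteq> Poly_Mapping.keys L"
      by (auto simp: in_keys_iff lookup_minus)
    then have P: "(mon (L - m') :: 'a mpoly) \<in> Pring n" unfolding mon_def using B(1) by (intro Pring_single) blast
    have "x = mon (L - m') * mon m'" using f(3) eqL by (simp add: L_def mon_def mult_single)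
    moreover have "(mon m' :: 'a mpoly) \<in> gen_ideal n G" unfolding G_def using m'(1) by (intro gen_ideal_gen) blast
    ultimately show "x \<in> gen_ideal n G" using gen_ideal_mult[OF P] by simp
  qed
  have eq: "gen_ideal n G = gen_ideal n LM"
    using gen_ideal_mono[OF GLM] gen_ideal_mono2[OF LMG] by blast
  have minimal: "gen_ideal n (G - {g}) \<noteq> gen_ideal n LM" if g: "g \<in> G" for g
  proof
    assume H: "gen_ideal n (G - {g}) = gen_ideal n LM"
    obtain m where m: "m \<in> Mset n" "g = mon m" using g unfolding G_def by blast
    have "g \<in> gen_ideal n G" by (rule gen_ideal_gen[OF g])
    then have "g \<in> gen_ideal n (G - {g})" using H eq by simp
    moreover have "G - {g} = mon ` (Mset n - {m})" unfolding G_def m(2) using mon_inj by blast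
    ultimately have "mon m \<in> gen_ideal n ((mon :: monom \<Rightarrow> 'a mpoly) ` (Mset n - {m}))" using m by simp
    moreover have "m \<in> Poly_Mapping.keys (mon m :: 'a mpoly)" by (simp add: keys_mon)
    ultimately obtain m'' where "m'' \<in> Mset n - {m}" "mdvd m'' m" using gen_ideal_mon_dvd by blast
    then show False using antichain m(1) by blast
  qed
  show ?thesis unfolding minimal_generators_def J G_def[symmetric] using eq minimal by blast
qed

theorem mainTheorem5:
  fixes n :: nat
  shows "minimal_generators n
           ((mon :: monom \<Rightarrow> 'a::field_char_0 mpoly) `
              ((\<lambda>i. Poly_Mapping.single i 2) ` {1..n} \<union> (\<Union>k\<in>{k. 2 \<le> k \<and> 2*k-2 \<le> n}. D k)))
           (initial_ideal n (In_ideal n :: 'a mpoly set))"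
  using main_aux[of n] unfolding Mset_def .


end
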